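(* Let $X$ be a random measurable set in $\mathbb{R}^d$. Then for all $W\in\mathcal{W}$, $u\in S^{d-1}$ and $\varepsilon\ne0$, $\sigma_X(\varepsilon u;W)\le\mathbf{E}\,V_u(X;W)$, and $\mathbf{E}\,V_u(X;W)=\lim_{\varepsilon\to0}\sigma_X(\varepsilon u;W)$.
   Context: A random measurable set is a random variable in the space of Lebesgue classes of measurable subsets of $\mathbb{R}^d$ with the Borel $\sigma$-algebra of local convergence in measure. $\mathcal{W}$: bounded open $W$ with $\mathcal{L}^d(\partial W)=0$. $\delta_{y;W}(A)=\mathcal{L}^d(A\cap(y+A)\cap W)$; $W\ominus B=\{x:x+B\subset W\}$. For $u\ne0$, $\sigma_{u;W}(A)=\frac1{\|u\|}(\delta_{0;W\ominus[-u,0]}(A)-\delta_{u;W\ominus[-u,0]}(A)+\delta_{0;W\ominus[0,u]}(A)-\delta_{-u;W\ominus[0,u]}(A))$ and $\sigma_X(u;W)=\mathbf{E}\,\sigma_{u;W}(X)$. $V_u(A;U)=\sup\{\int_U\mathbb{1}_A\langle\nabla\varphi,u\rangle dx:\varphi\in C^1_c(U,\mathbb{R}),|\varphi|\le1\}$. *)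

theory Defs
  imports "HOL-Probability.Probability"
begin

definition admissible_window :: "'a::euclidean_space set \<Rightarrow> bool" where
  "admissible_window W \<longleftrightarrow> bounded W \<and> open W \<and> emeasure lebesgue (frontier W) = 0"

definition random_measurable_set :: "'b measure \<Rightarrow> ('b \<Rightarrow> 'a::euclidean_space set) \<Rightarrow> bool" where
  "random_measurable_set M X \<longleftrightarrow> prob_space M \<and>
     {p \<in> space M \<times> UNIV. snd p \<in> X (fst p)} \<in> sets (M \<Otimes>\<^sub>M lborel)"

definition erosion :: "'a::euclidean_space set \<Rightarrow> 'a set \<Rightarrow> 'a set" where
  "erosion W B = {x. (\<lambda>b. x + b) ` B \<subseteq> W}"

definition covario :: "'a::euclidean_space \<Rightarrow> 'a set \<Rightarrow> 'a set \<Rightarrow> real" where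
  "covario y W A = measure lebesgue (A \<inter> ((\<lambda>a. y + a) ` A) \<inter> W)"

definition sigma_fun :: "'a::euclidean_space \<Rightarrow> 'a set \<Rightarrow> 'a set \<Rightarrow> real" where
  "sigma_fun u W A = (1 / norm u) *
     (covario 0 (erosion W (closed_segment (- u) 0)) A
      - covario u (erosion W (closed_segment (- u) 0)) A
      + covario 0 (erosion W (closed_segment 0 u)) A
      - covario (- u) (erosion W (closed_segment 0 u)) A)"

definition sigma_X :: "'b measure \<Rightarrow> ('b \<Rightarrow> 'a::euclidean_space set) \<Rightarrow> 'a \<Rightarrow> 'a set \<Rightarrow> real" where
  "sigma_X M X u W = (\<integral>\<omega>. sigma_fun u W (X \<omega>) \<partial>M)"

text \<open>Test functions C^1_c(U,R) with |phi| \<le> 1 (extended by zero outside U),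
  together with their (continuous) Frechet derivative phi'.\<close>
definition C1c_test :: "'a::euclidean_space set \<Rightarrow> ('a \<Rightarrow> real) \<Rightarrow> ('a \<Rightarrow> 'a \<Rightarrow> real) \<Rightarrow> bool" where
  "C1c_test U \<phi> \<phi>' \<longleftrightarrow>
     (\<forall>x. (\<phi> has_derivative \<phi>' x) (at x)) \<and>
     (\<forall>v. continuous_on UNIV (\<lambda>x. \<phi>' x v)) \<and>
     compact (closure {x. \<phi> x \<noteq> 0}) \<and> closure {x. \<phi> x \<noteq> 0} \<subseteq> U \<and>
     (\<forall>x. \<bar>\<phi> x\<bar> \<le> 1)"

text \<open>Directional variation V_u(A;U); note phi' x u = <grad phi x, u>.\<close>
definition dir_variation :: "'a::euclidean_space \<Rightarrow> 'a set \<Rightarrow> 'a set \<Rightarrow> ereal" where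
  "dir_variation u A U = (SUP p \<in> {(\<phi>, \<phi>'). C1c_test U \<phi> \<phi>'}.
      ereal (\<integral>x. indicator (A \<inter> U) x * snd p x u \<partial>lebesgue))"

text \<open>E V_u(X;W) (V_u is nonnegative, so the nonnegative integral is used).\<close>
definition exp_dir_variation :: "'b measure \<Rightarrow> ('b \<Rightarrow> 'a::euclidean_space set) \<Rightarrow> 'a \<Rightarrow> 'a set \<Rightarrow> ereal" where
  "exp_dir_variation M X u W = enn2ereal (\<integral>\<^sup>+\<omega>. e2ennreal (dir_variation u (X \<omega>) W) \<partial>M)"

end

theory Submission
  imports Defs
begin

lemma sigma_even: "sigma_fun (- v) W A = sigma_fun v W A"
  unfolding sigma_fun_def by (simp add: closed_segment_commute algebra_simps)

lemma erosion_seg_iff: "x \<in> erosion W (closed_segment a b) \<longleftrightarrow> (\<forall>c\<in>closed_segment a b. x + c \<in> W)"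
  unfolding erosion_def by auto

lemma erosion_open:
  fixes W :: "'a::euclidean_space set"
  assumes "open W" shows "open (erosion W (closed_segment a b))"
proof -
  have "- erosion W (closed_segment a b) = (\<Union>x\<in> -W. \<Union>y \<in> closed_segment a b. {x - y})"
    unfolding erosion_def by (auto simp: image_subset_iff)
  moreover have "closed (\<Union>x\<in> -W. \<Union>y \<in> closed_segment a b. {x - y})"
    by (rule closed_compact_differences) (use assms in auto)
  ultimately show ?thesis by (metis closed_open double_complement)
qed

lemma erosion_sub:
  assumes "0 \<in> S" shows "erosion W S \<subseteq> W"
  using assms unfolding erosion_def by force

lemma erosion_shift: "x \<in> erosion W (closed_segment 0 v) \<longleftrightarrow> x + v \<in> erosion W (closed_segment (-v) 0)"
proof -
  have "closed_segment (-v) 0 = (\<lambda>c. c - v) ` closed_segment 0 v"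
    using closed_segment_translation[of "-v" 0 v] by (simp add: algebra_simps)
  then show ?thesis unfolding erosion_seg_iff by (auto simp: algebra_simps)
qed

lemma img_add_eq: "(\<lambda>a. y + a) ` A = (\<lambda>z. z - y) -` (A::'a::ab_group_add set)"
proof (auto simp: image_iff)
  fix x assume "x - y \<in> A" then show "\<exists>a\<in>A. x = y + a" by (intro bexI[of _ "x - y"]) auto
qed

lemma borel_vim_sub: "A \<in> sets borel \<Longrightarrow> (\<lambda>z. z - y) -` A \<in> sets (borel::'a::euclidean_space measure)"
  by (rule measurable_sets_borel[of _ borel]) auto

lemma covario_int:
  fixes A E :: "'a::euclidean_space set"
  assumes A: "A \<in> sets borel" and E: "E \<in> sets borel" "bounded E"
  shows "covario y E A = (\<integral>z. indicator A z * indicator A (z - y) * indicator E z \<partial>lborel)"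
proof -
  let ?S = "A \<inter> (\<lambda>z. z - y) -` A \<inter> E"
  have S: "?S \<in> sets borel" using A E borel_vim_sub[OF A] by auto
  have "covario y E A = measure lebesgue ?S"
    unfolding covario_def img_add_eq ..
  also have "\<dots> = measure lborel ?S" using S by simp
  also have "\<dots> = (\<integral>z. indicator ?S z \<partial>lborel)" by simp
  also have "\<dots> = (\<integral>z. indicator A z * indicator A (z - y) * indicator E z \<partial>lborel)"
    by (intro Bochner_Integration.integral_cong) (auto simp: indicator_def)
  finally show ?thesis .
qed

lemma integrable_bdd_set:
  fixes f :: "'a::euclidean_space \<Rightarrow> real"
  assumes "f \<in> borel_measurable borel" "E \<in> sets borel" "bounded E" "\<And>x. \<bar>f x\<bar> \<le> c * indicator E x"
  shows "integrable lborel f"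
proof (rule Bochner_Integration.integrable_bound[where f="\<lambda>x. c * indicator E x"])
  show "integrable lborel (\<lambda>x. c * indicator E x :: real)"
    using assms(2,3) emeasure_bounded_finite[OF assms(3)] by auto
  show "f \<in> borel_measurable lborel" using assms(1) by simp
  show "AE x in lborel. norm (f x) \<le> norm (c * indicator E x :: real)"
    using assms(4) by (intro AE_I2) (smt (verit, best) real_norm_def)
qed

lemma integral_translate:
  fixes f :: "'a::euclidean_space \<Rightarrow> real"
  assumes "f \<in> borel_measurable borel"
  shows "(\<integral>z. f z \<partial>lborel) = (\<integral>z. f (c + z) \<partial>lborel)"
proof -
  have "(\<integral>z. f z \<partial>lborel) = integral\<^sup>L (distr lborel borel ((+) c)) f"
    by (simp add: lborel_distr_plus)
  also have "\<dots> = (\<integral>z. f (c + z) \<partial>lborel)"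
    by (rule integral_distr) (use assms in auto)
  finally show ?thesis .
qed

definition Er :: "'a::euclidean_space set \<Rightarrow> 'a \<Rightarrow> 'a set" where
  "Er W v = erosion W (closed_segment (-v) 0)"

lemma Er_props:
  assumes "admissible_window W"
  shows "open (Er W v)" "Er W v \<subseteq> W" "bounded (Er W v)" "Er W v \<in> sets borel"
proof -
  show o: "open (Er W v)" unfolding Er_def
    by (rule erosion_open) (use assms in \<open>auto simp: admissible_window_def\<close>)
  show s: "Er W v \<subseteq> W" unfolding Er_def by (rule erosion_sub) auto
  show "bounded (Er W v)" using s assms bounded_subset unfolding admissible_window_def by blast
  show "Er W v \<in> sets borel" using o by auto
qed

lemma sigma_formula:
  fixes A W :: "'a::euclidean_space set"
  assumes A: "A \<in> sets borel" and W: "admissible_window W" and v: "v \<noteq> 0"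
  shows "norm v * sigma_fun v W A =
    (\<integral>z. indicator (Er W v) z * \<bar>indicator A z - indicator A (z - v)\<bar> \<partial>lborel)"
proof -
  define E where "E = Er W v"
  define E2 where "E2 = erosion W (closed_segment 0 v)"
  note Ep = Er_props[OF W, of v, folded E_def]
  have E2: "E2 = (\<lambda>z. z - (-v)) -` E" unfolding E2_def E_def Er_def using erosion_shift by auto
  have E2b: "E2 \<in> sets borel" unfolding E2 by (rule borel_vim_sub) (use Ep in auto)
  have E2bd: "bounded E2" unfolding E2_def
    by (rule bounded_subset[of W]) (use W erosion_sub in \<open>auto simp: admissible_window_def\<close>)
  have mA: "indicator A \<in> borel_measurable borel" using A by auto
  have mAs: "(\<lambda>z. indicator A (z - y) :: real) \<in> borel_measurable borel" for y
    using A by measurable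
  have mE: "(indicator E :: _ \<Rightarrow> real) \<in> borel_measurable borel" "(indicator E2 :: _ \<Rightarrow> real) \<in> borel_measurable borel"
    using Ep E2b by auto
  have ind: "\<bar>indicator S x :: real\<bar> \<le> 1" for S x by (simp add: indicator_def)
  have iE: "integrable lborel (\<lambda>z. f z * indicator E z)" if "f \<in> borel_measurable borel" "\<And>z. \<bar>f z\<bar> \<le> 1" for f :: "'a \<Rightarrow> real"
  proof (rule integrable_bdd_set[where E=E and c=1])
    show "(\<lambda>z. f z * indicator E z) \<in> borel_measurable borel" using that(1) mE(1) by (rule borel_measurable_times)
  qed (use that Ep in \<open>auto simp: abs_mult indicator_def\<close>)
  have iE2: "integrable lborel (\<lambda>z. f z * indicator E2 z)" if "f \<in> borel_measurable borel" "\<And>z. \<bar>f z\<bar> \<le> 1" for f :: "'a \<Rightarrow> real"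
  proof (rule integrable_bdd_set[where E=E2 and c=1])
    show "(\<lambda>z. f z * indicator E2 z) \<in> borel_measurable borel" using that(1) mE(2) by (rule borel_measurable_times)
  qed (use that E2b E2bd in \<open>auto simp: abs_mult indicator_def\<close>)
  have mAA: "(\<lambda>z. indicator A (z - y) * indicator A (z - y') :: real) \<in> borel_measurable borel" for y y'
    using A by measurable
  have bAA: "\<bar>indicator A (z - y) * indicator A (z - y') :: real\<bar> \<le> 1" for y y' z
    by (simp add: indicator_def)
  have mAA': "(\<lambda>z. indicator A (z - y) * (1 - indicator A (z - y')) :: real) \<in> borel_measurable borel" for y y'
    using A by measurable
  have bAA': "\<bar>indicator A (z - y) * (1 - indicator A (z - y')) :: real\<bar> \<le> 1" for y y' z
    by (simp add: indicator_def)
  have i1: "integrable lborel (\<lambda>z. indicator A (z - y) * indicator A (z - y') * indicator E z :: real)" for y y'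
    using iE[OF mAA bAA] by simp
  have i2: "integrable lborel (\<lambda>z. indicator A (z - y) * indicator A (z - y') * indicator E2 z :: real)" for y y'
    using iE2[OF mAA bAA] by simp
  have i3: "integrable lborel (\<lambda>z. indicator A (z - y) * (1 - indicator A (z - y')) * indicator E z :: real)" for y y'
    using iE[OF mAA' bAA'] by simp
  have c1: "covario 0 E A - covario v E A = (\<integral>z. indicator A z * (1 - indicator A (z - v)) * indicator E z \<partial>lborel)"
  proof -
    have "covario 0 E A - covario v E A = (\<integral>z. indicator A (z - 0) * indicator A (z - 0) * indicator E z \<partial>lborel)
       - (\<integral>z. indicator A (z - 0) * indicator A (z - v) * indicator E z \<partial>lborel)"
      using covario_int[OF A] Ep by simp
    also have "\<dots> = (\<integral>z. indicator A (z - 0) * indicator A (z - 0) * indicator E z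
       - indicator A (z - 0) * indicator A (z - v) * indicator E z \<partial>lborel)"
      by (rule Bochner_Integration.integral_diff[symmetric]) (rule i1)+
    also have "\<dots> = (\<integral>z. indicator A z * (1 - indicator A (z - v)) * indicator E z \<partial>lborel)"
      by (intro Bochner_Integration.integral_cong) (auto simp: indicator_def)
    finally show ?thesis .
  qed
  have c2: "covario 0 E2 A - covario (-v) E2 A = (\<integral>z. indicator A (z - v) * (1 - indicator A z) * indicator E z \<partial>lborel)"
  proof -
    have "covario 0 E2 A - covario (-v) E2 A = (\<integral>z. indicator A (z - 0) * indicator A (z - 0) * indicator E2 z \<partial>lborel)
       - (\<integral>z. indicator A (z - 0) * indicator A (z - (-v)) * indicator E2 z \<partial>lborel)"
      using covario_int[OF A E2b E2bd] by simp
    also have "\<dots> = (\<integral>z. indicator A (z - 0) * indicator A (z - 0) * indicator E2 z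
       - indicator A (z - 0) * indicator A (z - (-v)) * indicator E2 z \<partial>lborel)"
      by (rule Bochner_Integration.integral_diff[symmetric]) (rule i2)+
    also have "\<dots> = (\<integral>z. indicator A z * (1 - indicator A (z + v)) * indicator E2 z \<partial>lborel)"
      by (intro Bochner_Integration.integral_cong) (auto simp: indicator_def)
    also have "\<dots> = (\<integral>z. indicator A (-v + z) * (1 - indicator A (-v + z + v)) * indicator E2 (-v + z) \<partial>lborel)"
      by (rule integral_translate) (use A E2b in measurable)
    also have "\<dots> = (\<integral>z. indicator A (z - v) * (1 - indicator A z) * indicator E z \<partial>lborel)"
      by (intro Bochner_Integration.integral_cong) (auto simp: indicator_def E2)
    finally show ?thesis .
  qed
  have "norm v * sigma_fun v W A = (covario 0 E A - covario v E A) + (covario 0 E2 A - covario (-v) E2 A)"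
    using v unfolding sigma_fun_def E_def E2_def Er_def by (simp add: field_simps)
  also have "\<dots> = (\<integral>z. indicator A z * (1 - indicator A (z - v)) * indicator E z
      + indicator A (z - v) * (1 - indicator A z) * indicator E z \<partial>lborel)"
  proof -
    have "(\<integral>z. (indicator A z * (1 - indicator A (z - v)) * indicator E z :: real) \<partial>lborel)
       + (\<integral>z. (indicator A (z - v) * (1 - indicator A z) * indicator E z :: real) \<partial>lborel)
      = (\<integral>z. (indicator A (z - 0) * (1 - indicator A (z - v)) * indicator E z :: real) \<partial>lborel)
       + (\<integral>z. (indicator A (z - v) * (1 - indicator A (z - 0)) * indicator E z :: real) \<partial>lborel)" by simp
    also have "\<dots> = (\<integral>z. (indicator A (z - 0) * (1 - indicator A (z - v)) * indicator E z
      + indicator A (z - v) * (1 - indicator A (z - 0)) * indicator E z :: real) \<partial>lborel)"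
      by (rule Bochner_Integration.integral_add[symmetric]) (rule i3)+
    finally show ?thesis unfolding c1 c2 by simp
  qed
  also have "\<dots> = (\<integral>z. indicator E z * \<bar>indicator A z - indicator A (z - v)\<bar> \<partial>lborel)"
    by (intro Bochner_Integration.integral_cong) (auto simp: indicator_def)
  finally show ?thesis unfolding E_def .
qed


lemma sigma_bounds:
  fixes A W :: "'a::euclidean_space set" and v :: 'a
  assumes A: "A \<in> sets borel" and W: "admissible_window W" and v: "v \<noteq> 0"
  shows "0 \<le> sigma_fun v W A \<and> sigma_fun v W A \<le> measure lebesgue W / norm v"
proof -
  note Ep = Er_props[OF W, of v]
  let ?E = "Er W v"
  have Wb: "W \<in> sets borel" "bounded W" using W by (auto simp: admissible_window_def)
  have iE: "integrable lborel (indicator ?E :: 'a \<Rightarrow> real)"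
    using Ep emeasure_bounded_finite[of ?E] by auto
  have m: "(\<lambda>z. indicator ?E z * \<bar>indicator A z - indicator A (z - v)\<bar> :: real) \<in> borel_measurable borel"
    using A Ep by measurable
  have ii: "integrable lborel (\<lambda>z. indicator ?E z * \<bar>indicator A z - indicator A (z - v)\<bar> :: real)"
    by (rule integrable_bdd_set[where E="?E" and c=1]) (use m Ep in \<open>auto simp: indicator_def\<close>)
  have nn: "0 \<le> norm v * sigma_fun v W A"
    unfolding sigma_formula[OF A W v] by (rule Bochner_Integration.integral_nonneg) (auto simp: indicator_def)
  have "norm v * sigma_fun v W A \<le> (\<integral>z. indicator ?E z \<partial>lborel)"
    unfolding sigma_formula[OF A W v]
    by (rule Bochner_Integration.integral_mono[OF ii iE]) (auto simp: indicator_def)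
  also have "\<dots> = measure lborel ?E" by simp
  also have "\<dots> \<le> measure lborel W"
    by (rule measure_mono_fmeasurable) (use Ep Wb emeasure_bounded_finite[of W] in \<open>auto simp: fmeasurable_def\<close>)
  also have "\<dots> = measure lebesgue W" using Wb by simp
  finally have up: "norm v * sigma_fun v W A \<le> measure lebesgue W" .
  have nv: "norm v > 0" using v by simp
  show ?thesis using nn up nv by (auto simp: field_simps zero_le_mult_iff)
qed

lemma covario_meas:
  fixes X :: "'b \<Rightarrow> 'a::euclidean_space set"
  assumes RS: "random_measurable_set M X" and F: "F \<in> sets borel"
  shows "(\<lambda>\<omega>. covario y F (X \<omega>)) \<in> borel_measurable M"
proof -
  define G where "G = {p \<in> space M \<times> UNIV. snd p \<in> X (fst p)}"
  have G: "G \<in> sets (M \<Otimes>\<^sub>M lborel)" using RS unfolding random_measurable_set_def G_def by auto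
  define Q where "Q = G \<inter> ((\<lambda>p. (fst p, snd p - y)) -` G \<inter> space (M \<Otimes>\<^sub>M lborel)) \<inter> (space M \<times> F)"
  have mm: "(\<lambda>p. (fst p, snd p - y)) \<in> measurable (M \<Otimes>\<^sub>M lborel) (M \<Otimes>\<^sub>M lborel)"
    by measurable
  have Q: "Q \<in> sets (M \<Otimes>\<^sub>M lborel)" unfolding Q_def
    using G F measurable_sets[OF mm G] by (auto intro!: sets.Int pair_measureI)
  have "(\<lambda>\<omega>. enn2real (emeasure lborel (Pair \<omega> -` Q))) \<in> borel_measurable M"
    using lborel.measurable_emeasure_Pair[OF Q] by measurable
  moreover have "enn2real (emeasure lborel (Pair \<omega> -` Q)) = covario y F (X \<omega>)" if w: "\<omega> \<in> space M" for \<omega>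
  proof -
    have eq: "Pair \<omega> -` Q = X \<omega> \<inter> (\<lambda>a. y + a) ` X \<omega> \<inter> F"
      using w unfolding Q_def G_def img_add_eq by (auto simp: space_pair_measure)
    have "Pair \<omega> -` Q \<in> sets lborel" using Q by (rule sets_Pair1)
    then show ?thesis unfolding covario_def eq[symmetric]
      by (simp add: measure_def)
  qed
  ultimately show ?thesis by (rule measurable_cong[THEN iffD1, rotated]) simp
qed

lemma sigma_meas:
  fixes X :: "'b \<Rightarrow> 'a::euclidean_space set"
  assumes "random_measurable_set M X" "admissible_window W"
  shows "(\<lambda>\<omega>. sigma_fun v W (X \<omega>)) \<in> borel_measurable M"
proof -
  have o: "open W" using assms(2) by (auto simp: admissible_window_def)
  have b: "erosion W (closed_segment a b) \<in> sets borel" for a b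
    using erosion_open[OF o] by auto
  show ?thesis unfolding sigma_fun_def
    by (intro borel_measurable_times borel_measurable_add borel_measurable_diff borel_measurable_const
        covario_meas[OF assms(1) b])
qed


lemma C1c_deriv_zero:
  assumes T: "C1c_test U \<phi> \<phi>'" and x: "x \<notin> closure {x. \<phi> x \<noteq> 0}"
  shows "\<phi>' x = (\<lambda>_. 0)"
proof -
  have d: "(\<phi> has_derivative \<phi>' x) (at x)" using T unfolding C1c_test_def by blast
  have "((\<lambda>_. 0) has_derivative \<phi>' x) (at x)"
    by (rule has_derivative_transform_within_open[OF d, of "- closure {x. \<phi> x \<noteq> 0}"])
       (use x closure_subset[of "{x. \<phi> x \<noteq> 0}"] in force)+
  moreover have "((\<lambda>_. 0::real) has_derivative (\<lambda>_. 0)) (at x)" by simp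
  ultimately show ?thesis by (rule has_derivative_unique)
qed

lemma C1c_deriv_lin:
  assumes T: "C1c_test U \<phi> \<phi>'"
  shows "\<phi>' x (c *\<^sub>R v) = c * \<phi>' x v"
proof -
  have d: "(\<phi> has_derivative \<phi>' x) (at x)" using T unfolding C1c_test_def by blast
  then have "linear (\<phi>' x)" using has_derivative_linear by blast
  then show ?thesis by (simp add: linear_scale)
qed

lemma C1c_neg:
  assumes T: "C1c_test U \<phi> \<phi>'"
  shows "C1c_test U (\<lambda>x. - \<phi> x) (\<lambda>x v. - \<phi>' x v)"
  using T unfolding C1c_test_def by (auto intro!: derivative_eq_intros continuous_intros)

lemma C1c_shift:
  fixes \<phi> :: "'a::euclidean_space \<Rightarrow> real"
  assumes T: "C1c_test U \<phi> \<phi>'" and sub: "(\<lambda>x. x - c) ` closure {x. \<phi> x \<noteq> 0} \<subseteq> U'"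
  shows "C1c_test U' (\<lambda>x. \<phi> (x + c)) (\<lambda>x. \<phi>' (x + c))"
proof -
  have cl: "closure {x. \<phi> (x + c) \<noteq> 0} = (\<lambda>x. x - c) ` closure {x. \<phi> x \<noteq> 0}"
  proof -
    have "{x. \<phi> (x + c) \<noteq> 0} = (\<lambda>x. x - c) ` {x. \<phi> x \<noteq> 0}"
    proof (auto simp: image_iff)
      fix x assume "\<phi> (x + c) \<noteq> 0" then show "\<exists>xa. \<phi> xa \<noteq> 0 \<and> x = xa - c"
        by (intro exI[of _ "x + c"]) auto
    qed
    then show ?thesis using closure_translation_subtract by metis
  qed
  have d: "\<And>x. (\<phi> has_derivative \<phi>' x) (at x)" using T unfolding C1c_test_def by blast
  have dd: "((\<lambda>x. \<phi> (x + c)) has_derivative \<phi>' (x + c)) (at x)" for x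
  proof -
    have "((\<lambda>x. x + c) has_derivative (\<lambda>x. x)) (at x)" by (auto intro!: derivative_eq_intros)
    from has_derivative_compose[OF this d[of "x + c"]] show ?thesis by (simp add: o_def)
  qed
  have cont: "continuous_on UNIV (\<lambda>x. \<phi>' (x + c) v)" for v
  proof -
    have "continuous_on UNIV (\<lambda>x. \<phi>' x v)" using T unfolding C1c_test_def by blast
    then show ?thesis by (rule continuous_on_compose2) (auto intro!: continuous_intros)
  qed
  have comp: "compact ((\<lambda>x. x - c) ` closure {x. \<phi> x \<noteq> 0})"
    using T unfolding C1c_test_def by (auto intro!: compact_continuous_image continuous_intros)
  show ?thesis unfolding C1c_test_def cl using dd cont comp sub T unfolding C1c_test_def by auto
qed

lemma C1c_bounded_deriv:
  assumes T: "C1c_test U \<phi> \<phi>'"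
  obtains B where "B \<ge> 0" "\<And>x. \<bar>\<phi>' x v\<bar> \<le> B"
proof -
  let ?K = "closure {x. \<phi> x \<noteq> 0}"
  have "compact ((\<lambda>x. \<phi>' x v) ` ?K)"
    using T unfolding C1c_test_def by (intro compact_continuous_image) (auto intro: continuous_on_subset)
  then obtain B where B: "\<And>y. y \<in> (\<lambda>x. \<phi>' x v) ` ?K \<Longrightarrow> norm y \<le> B"
    using compact_imp_bounded bounded_iff by metis
  show ?thesis
  proof (rule that[of "max B 0"])
    fix x show "\<bar>\<phi>' x v\<bar> \<le> max B 0"
    proof (cases "x \<in> ?K")
      case True then show ?thesis using B[of "\<phi>' x v"] by force
    next
      case False then show ?thesis using C1c_deriv_zero[OF T False] by simp
    qed
  qed simp
qed

lemma C1c_mvt: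
  assumes T: "C1c_test U \<phi> \<phi>'" and B: "\<And>x. \<bar>\<phi>' x u\<bar> \<le> B"
  shows "\<bar>\<phi> (z + h *\<^sub>R u) - \<phi> z\<bar> \<le> B * \<bar>h\<bar>"
proof -
  have d: "\<And>x. (\<phi> has_derivative \<phi>' x) (at x)" using T unfolding C1c_test_def by blast
  have D: "DERIV (\<lambda>s. \<phi> (z + s *\<^sub>R u)) s :> \<phi>' (z + s *\<^sub>R u) u" for s
  proof -
    have "((\<lambda>s. z + s *\<^sub>R u) has_derivative (\<lambda>s. s *\<^sub>R u)) (at s)" by (auto intro!: derivative_eq_intros)
    from has_derivative_compose[OF this d] have
      "((\<lambda>s. \<phi> (z + s *\<^sub>R u)) has_derivative (\<lambda>t. \<phi>' (z + s *\<^sub>R u) (t *\<^sub>R u))) (at s)"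
      by (simp add: o_def)
    moreover have "(\<lambda>t. \<phi>' (z + s *\<^sub>R u) (t *\<^sub>R u)) = (\<lambda>t. \<phi>' (z + s *\<^sub>R u) u * t)"
      using C1c_deriv_lin[OF T] by (auto simp: mult.commute)
    ultimately show ?thesis by (simp add: has_field_derivative_def)
  qed
  consider "h = 0" | "h > 0" | "h < 0" by linarith
  then show ?thesis
  proof cases
    case 1 then show ?thesis by simp
  next
    case 2
    from MVT2[OF 2, of "\<lambda>s. \<phi> (z + s *\<^sub>R u)", OF D] obtain y where
      "\<phi> (z + h *\<^sub>R u) - \<phi> (z + 0 *\<^sub>R u) = (h - 0) * \<phi>' (z + y *\<^sub>R u) u" by blast
    then show ?thesis using B[of "z + y *\<^sub>R u"] 2 by (simp add: abs_mult mult.commute mult_right_mono)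
  next
    case 3
    from MVT2[OF 3, of "\<lambda>s. \<phi> (z + s *\<^sub>R u)", OF D] obtain y where
      "\<phi> (z + 0 *\<^sub>R u) - \<phi> (z + h *\<^sub>R u) = (0 - h) * \<phi>' (z + y *\<^sub>R u) u" by blast
    then have "\<phi> (z + h *\<^sub>R u) - \<phi> z = h * \<phi>' (z + y *\<^sub>R u) u" by simp
    then have "\<bar>\<phi> (z + h *\<^sub>R u) - \<phi> z\<bar> = \<bar>h\<bar> * \<bar>\<phi>' (z + y *\<^sub>R u) u\<bar>" by (simp add: abs_mult)
    then show ?thesis using B[of "z + y *\<^sub>R u"] 3 by (simp add: mult.commute mult_left_mono)
  qed
qed

lemma C1c_meas:
  assumes T: "C1c_test U \<phi> \<phi>'"
  shows "\<phi> \<in> borel_measurable borel" "(\<lambda>x. \<phi>' x v) \<in> borel_measurable borel"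
proof -
  have "continuous_on UNIV \<phi>" using T unfolding C1c_test_def
    by (meson continuous_at_imp_continuous_on has_derivative_continuous)
  then show "\<phi> \<in> borel_measurable borel" by (rule borel_measurable_continuous_onI)
  show "(\<lambda>x. \<phi>' x v) \<in> borel_measurable borel" using T unfolding C1c_test_def
    by (intro borel_measurable_continuous_onI) auto
qed


lemma C1c_var:
  fixes A :: "'a::euclidean_space set"
  assumes T: "C1c_test U \<phi> \<phi>'" and A: "A \<in> sets borel"
  shows "ereal (\<integral>x. indicator A x * \<phi>' x u \<partial>lborel) \<le> dir_variation u A U"
proof -
  have "ereal (\<integral>x. indicator (A \<inter> U) x * snd (\<phi>, \<phi>') x u \<partial>lebesgue) \<le> dir_variation u A U"
    unfolding dir_variation_def by (rule SUP_upper) (use T in auto)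
  moreover have "(\<integral>x. indicator (A \<inter> U) x * snd (\<phi>, \<phi>') x u \<partial>lebesgue) = (\<integral>x. indicator A x * \<phi>' x u \<partial>lebesgue)"
  proof (intro Bochner_Integration.integral_cong refl)
    fix x
    show "indicator (A \<inter> U) x * snd (\<phi>, \<phi>') x u = indicator A x * \<phi>' x u"
    proof (cases "x \<in> closure {x. \<phi> x \<noteq> 0}")
      case True
      then have "x \<in> U" using T unfolding C1c_test_def by blast
      then show ?thesis by (simp add: indicator_def)
    next
      case False then show ?thesis using C1c_deriv_zero[OF T False] by simp
    qed
  qed
  moreover have "(\<integral>x. indicator A x * \<phi>' x u \<partial>lebesgue) = (\<integral>x. indicator A x * \<phi>' x u \<partial>lborel)"
    by (rule integral_completion) (use A C1c_meas(2)[OF T, of u] in measurable)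
  ultimately show ?thesis by simp
qed

lemma DQ:
  fixes \<phi> :: "'a::euclidean_space \<Rightarrow> real"
  assumes T: "C1c_test U \<phi> \<phi>'" and u: "u \<noteq> 0" and h: "h \<longlonglongrightarrow> 0" and hn: "\<And>n. h n \<noteq> 0"
  shows "(\<lambda>n. \<integral>z. \<bar>(\<phi> (z + h n *\<^sub>R u) - \<phi> z) / h n - \<phi>' z u\<bar> \<partial>lborel) \<longlonglongrightarrow> 0"
proof -
  define K where "K = closure {x. \<phi> x \<noteq> 0}"
  have K: "compact K" using T unfolding C1c_test_def K_def by blast
  obtain B where B0: "B \<ge> 0" and B: "\<And>x. \<bar>\<phi>' x u\<bar> \<le> B" using C1c_bounded_deriv[OF T] by blast
  obtain H where H: "\<And>n. \<bar>h n\<bar> \<le> H"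
    using convergent_imp_Bseq[OF convergentI[OF h]] unfolding Bseq_def by (metis real_norm_def less_imp_le)
  define K' where "K' = {x + y | x y. x \<in> K \<and> y \<in> cball 0 (H * norm u)}"
  have K': "compact K'" unfolding K'_def by (rule compact_sums[OF K]) simp
  have K'b: "K' \<in> sets borel" using K' by (simp add: compact_imp_closed)
  have K'f: "emeasure lborel K' < \<infinity>" using emeasure_bounded_finite[OF compact_imp_bounded[OF K']] by simp
  define s where "s n z = \<bar>(\<phi> (z + h n *\<^sub>R u) - \<phi> z) / h n - \<phi>' z u\<bar>" for n z
  have cphi: "continuous_on UNIV \<phi>" using T unfolding C1c_test_def
    by (meson continuous_at_imp_continuous_on has_derivative_continuous)
  have cphi2: "continuous_on UNIV (\<lambda>z. \<phi> (z + c))" for c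
    by (rule continuous_on_compose2[OF cphi]) (auto intro!: continuous_intros)
  have cd: "continuous_on UNIV (\<lambda>x. \<phi>' x u)" using T unfolding C1c_test_def by blast
  have ms: "s n \<in> borel_measurable lborel" for n
  proof -
    have "continuous_on UNIV (s n)" unfolding s_def
      by (intro continuous_intros cphi2 cphi cd) (simp add: hn)
    then show ?thesis by (simp add: borel_measurable_continuous_onI)
  qed
  have KK': "K \<subseteq> K'" unfolding K'_def
  proof
    fix x assume "x \<in> K"
    moreover have "H * norm u \<ge> 0" using H[of 0] by simp
    ultimately show "x \<in> {x + y | x y. x \<in> K \<and> y \<in> cball 0 (H * norm u)}"
      by (intro CollectI exI[of _ x] exI[of _ 0]) simp
  qed
  have zero_out: "\<phi> x = 0" if "x \<notin> K" for x using that closure_subset[of "{x. \<phi> x \<noteq> 0}"] unfolding K_def by blast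
  have bnd: "s n z \<le> 2 * B * indicator K' z" for n z
  proof (cases "z \<in> K'")
    case True
    have "\<bar>\<phi> (z + h n *\<^sub>R u) - \<phi> z\<bar> \<le> B * \<bar>h n\<bar>" by (rule C1c_mvt[OF T B])
    moreover have "\<bar>h n\<bar> > 0" using hn[of n] by simp
    ultimately have "\<bar>(\<phi> (z + h n *\<^sub>R u) - \<phi> z) / h n\<bar> \<le> B"
      by (simp only: abs_divide pos_divide_le_eq)
    moreover have "\<bar>(\<phi> (z + h n *\<^sub>R u) - \<phi> z) / h n - \<phi>' z u\<bar> \<le> \<bar>(\<phi> (z + h n *\<^sub>R u) - \<phi> z) / h n\<bar> + \<bar>\<phi>' z u\<bar>"
      by (rule abs_triangle_ineq4)
    ultimately have "s n z \<le> 2 * B" using B[of z] unfolding s_def by linarith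
    then show ?thesis using True by simp
  next
    case False
    then have zK: "z \<notin> K" using KK' by blast
    have "z + h n *\<^sub>R u \<notin> K"
    proof
      assume "z + h n *\<^sub>R u \<in> K"
      moreover have "- (h n *\<^sub>R u) \<in> cball 0 (H * norm u)"
        using H[of n] by (simp add: mult_right_mono)
      ultimately have "z \<in> K'" unfolding K'_def
        by (intro CollectI exI[of _ "z + h n *\<^sub>R u"] exI[of _ "- (h n *\<^sub>R u)"]) simp
      then show False using False by simp
    qed
    then have a: "\<phi> (z + h n *\<^sub>R u) = 0" by (rule zero_out)
    have b: "\<phi> z = 0" using zK by (rule zero_out)
    have c: "\<phi>' z = (\<lambda>_. 0)" using C1c_deriv_zero[OF T] zK unfolding K_def by blast
    show ?thesis unfolding s_def a b c using False by simp
  qed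
  have lim: "(\<lambda>n. s n z) \<longlonglongrightarrow> 0" for z
  proof -
    have d: "(\<phi> has_derivative \<phi>' z) (at z)" using T unfolding C1c_test_def by blast
    then have R: "((\<lambda>y. norm (\<phi> y - \<phi> z - \<phi>' z (y - z)) / norm (y - z)) \<longlongrightarrow> 0) (at z)"
      unfolding has_derivative_iff_norm by blast
    define Y where "Y n = z + h n *\<^sub>R u" for n
    have Yn: "Y n \<in> UNIV - {z}" for n using hn[of n] u by (simp add: Y_def)
    have Yl: "Y \<longlonglongrightarrow> z" unfolding Y_def using h by (auto intro!: tendsto_eq_intros)
    have "((\<lambda>y. norm (\<phi> y - \<phi> z - \<phi>' z (y - z)) / norm (y - z)) \<circ> Y) \<longlonglongrightarrow> 0"
      using R unfolding tendsto_at_iff_sequentially using Yn Yl by blast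
    then have "(\<lambda>n. (norm (\<phi> (Y n) - \<phi> z - \<phi>' z (Y n - z)) / norm (Y n - z)) * norm u) \<longlonglongrightarrow> 0 * norm u"
      by (intro tendsto_mult tendsto_const) (simp add: o_def)
    moreover have "(norm (\<phi> (Y n) - \<phi> z - \<phi>' z (Y n - z)) / norm (Y n - z)) * norm u = s n z" for n
    proof -
      have "\<phi>' z (Y n - z) = h n * \<phi>' z u" unfolding Y_def using C1c_deriv_lin[OF T] by simp
      moreover have "norm (Y n - z) = \<bar>h n\<bar> * norm u" unfolding Y_def by simp
      moreover have "(\<phi> (z + h n *\<^sub>R u) - \<phi> z) / h n - \<phi>' z u
          = (\<phi> (z + h n *\<^sub>R u) - \<phi> z - h n * \<phi>' z u) / h n" using hn[of n] by (simp add: field_simps)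
      ultimately show ?thesis unfolding s_def Y_def using u hn[of n] by (simp add: abs_divide)
    qed
    ultimately show ?thesis by simp
  qed
  have f1: "integrable lborel (\<lambda>z. 2 * B * indicator K' z :: real)"
    by (intro integrable_mult_right integrable_real_indicator) (use K'b K'f in simp_all)
  have f2: "AE x in lborel. norm (s n x) \<le> 2 * B * indicator K' x" for n
  proof (rule AE_I2)
    fix x show "norm (s n x) \<le> 2 * B * indicator K' x" using bnd[of n x] by (simp add: s_def)
  qed
  have f0: "(\<lambda>z. 0::real) \<in> borel_measurable lborel" by simp
  have f3: "AE x in lborel. (\<lambda>i. s i x) \<longlonglongrightarrow> 0" by (rule AE_I2) (rule lim)
  have "(\<lambda>n. integral\<^sup>L lborel (s n)) \<longlonglongrightarrow> integral\<^sup>L lborel (\<lambda>z. 0::real)"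
    using integral_dominated_convergence[OF f0 ms f1 f3 f2] by simp
  then have "(\<lambda>n. integral\<^sup>L lborel (s n)) \<longlonglongrightarrow> 0" by simp
  then show ?thesis unfolding s_def .
qed


lemma C1c_cont:
  assumes T: "C1c_test U \<phi> \<phi>'"
  shows "continuous_on UNIV (\<lambda>z. \<phi> (z + c))"
proof -
  have cphi: "continuous_on UNIV \<phi>" using T unfolding C1c_test_def
    by (meson continuous_at_imp_continuous_on has_derivative_continuous)
  show ?thesis by (rule continuous_on_compose2[OF cphi]) (auto intro!: continuous_intros)
qed

lemma C1c_zero:
  assumes "x \<notin> closure {x. \<phi> x \<noteq> 0}" shows "\<phi> x = 0"
  using assms closure_subset[of "{x. \<phi> x \<noteq> 0}"] by blast

lemma C1c_abs:
  assumes T: "C1c_test U \<phi> \<phi>'" shows "\<bar>\<phi> x\<bar> \<le> 1"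
  using T unfolding C1c_test_def by blast

lemma C1c_integrable:
  fixes \<phi> :: "'a::euclidean_space \<Rightarrow> real"
  assumes T: "C1c_test U \<phi> \<phi>'" and g: "g \<in> borel_measurable borel" "\<And>z. \<bar>g z\<bar> \<le> 1"
  shows "integrable lborel (\<lambda>z. g z * \<phi> (z + c))"
proof -
  let ?K = "closure {x. \<phi> x \<noteq> 0}"
  let ?E = "(\<lambda>x. x - c) ` ?K"
  have K: "compact ?K" using T unfolding C1c_test_def by blast
  have E: "compact ?E" using K by (auto intro!: compact_continuous_image continuous_intros)
  show ?thesis
  proof (rule integrable_bdd_set[where E="?E" and c=1])
    show "(\<lambda>z. g z * \<phi> (z + c)) \<in> borel_measurable borel"
      using g(1) borel_measurable_continuous_onI[OF C1c_cont[OF T, of c]] by (rule borel_measurable_times)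
    show "?E \<in> sets borel" using E by (simp add: compact_imp_closed)
    show "bounded ?E" using E by (simp add: compact_imp_bounded)
    fix x show "\<bar>g x * \<phi> (x + c)\<bar> \<le> 1 * indicator ?E x"
    proof (cases "x \<in> ?E")
      case True
      have "\<bar>g x * \<phi> (x + c)\<bar> \<le> 1 * 1" unfolding abs_mult
        by (intro mult_mono g(2) C1c_abs[OF T]) auto
      then show ?thesis using True by simp
    next
      case False
      then have "x + c \<notin> ?K" by (force simp: image_iff)
      then show ?thesis using C1c_zero[of "x + c" \<phi>] False by simp
    qed
  qed
qed

lemma shift_identity:
  fixes \<phi> :: "'a::euclidean_space \<Rightarrow> real"
  assumes T: "C1c_test U \<phi> \<phi>'" and A: "A \<in> sets borel"
  shows "(\<integral>z. indicator A z * (\<phi> (z + v) - \<phi> z) \<partial>lborel)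
       = (\<integral>z. (indicator A (z - v) - indicator A z) * \<phi> z \<partial>lborel)"
proof -
  have mA: "(indicator A :: 'a \<Rightarrow> real) \<in> borel_measurable borel" using A by simp
  have mA2: "(\<lambda>z. indicator A (z - v) :: real) \<in> borel_measurable borel" using A by measurable
  have bA: "\<bar>indicator A z :: real\<bar> \<le> 1" for z by (simp add: indicator_def)
  have i1: "integrable lborel (\<lambda>z. indicator A z * \<phi> (z + v))" by (rule C1c_integrable[OF T mA bA])
  have i2: "integrable lborel (\<lambda>z. indicator A z * \<phi> (z + 0))" by (rule C1c_integrable[OF T mA bA])
  have i3: "integrable lborel (\<lambda>z. indicator A (z - v) * \<phi> (z + 0))" by (rule C1c_integrable[OF T mA2]) (simp add: indicator_def)
  have m1: "(\<lambda>z. indicator A z * \<phi> (z + v)) \<in> borel_measurable borel"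
    using mA borel_measurable_continuous_onI[OF C1c_cont[OF T, of v]] by (rule borel_measurable_times)
  have "(\<integral>z. indicator A z * (\<phi> (z + v) - \<phi> z) \<partial>lborel)
      = (\<integral>z. indicator A z * \<phi> (z + v) - indicator A z * \<phi> (z + 0) \<partial>lborel)"
    by (simp add: algebra_simps)
  also have "\<dots> = (\<integral>z. indicator A z * \<phi> (z + v) \<partial>lborel) - (\<integral>z. indicator A z * \<phi> (z + 0) \<partial>lborel)"
    by (rule Bochner_Integration.integral_diff[OF i1 i2])
  also have "(\<integral>z. indicator A z * \<phi> (z + v) \<partial>lborel) = (\<integral>z. indicator A (-v + z) * \<phi> (-v + z + v) \<partial>lborel)"
    by (rule integral_translate[OF m1])
  also have "\<dots> = (\<integral>z. indicator A (z - v) * \<phi> (z + 0) \<partial>lborel)" by (simp add: algebra_simps)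
  also have "(\<integral>z. indicator A (z - v) * \<phi> (z + 0) \<partial>lborel) - (\<integral>z. indicator A z * \<phi> (z + 0) \<partial>lborel)
      = (\<integral>z. indicator A (z - v) * \<phi> (z + 0) - indicator A z * \<phi> (z + 0) \<partial>lborel)"
    by (rule Bochner_Integration.integral_diff[OF i3 i2, symmetric])
  also have "\<dots> = (\<integral>z. (indicator A (z - v) - indicator A z) * \<phi> z \<partial>lborel)"
    by (simp add: algebra_simps)
  finally show ?thesis .
qed


lemma C1c_integrable_d:
  fixes \<phi> :: "'a::euclidean_space \<Rightarrow> real"
  assumes T: "C1c_test U \<phi> \<phi>'" and g: "g \<in> borel_measurable borel" "\<And>z. \<bar>g z\<bar> \<le> 1"
  shows "integrable lborel (\<lambda>z. g z * \<phi>' z v)"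
proof -
  let ?K = "closure {x. \<phi> x \<noteq> 0}"
  have K: "compact ?K" using T unfolding C1c_test_def by blast
  obtain B where B0: "B \<ge> 0" and B: "\<And>x. \<bar>\<phi>' x v\<bar> \<le> B" using C1c_bounded_deriv[OF T] by blast
  show ?thesis
  proof (rule integrable_bdd_set[where E="?K" and c=B])
    show "(\<lambda>z. g z * \<phi>' z v) \<in> borel_measurable borel"
      using g(1) C1c_meas(2)[OF T] by (rule borel_measurable_times)
    show "?K \<in> sets borel" using K by (simp add: compact_imp_closed)
    show "bounded ?K" using K by (simp add: compact_imp_bounded)
    fix x show "\<bar>g x * \<phi>' x v\<bar> \<le> B * indicator ?K x"
    proof (cases "x \<in> ?K")
      case True
      have "\<bar>g x * \<phi>' x v\<bar> \<le> 1 * B" unfolding abs_mult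
        by (intro mult_mono g(2) B) auto
      then show ?thesis using True by simp
    next
      case False
      then show ?thesis using C1c_deriv_zero[OF T False] by simp
    qed
  qed
qed

lemma DQg:
  fixes \<phi> :: "'a::euclidean_space \<Rightarrow> real"
  assumes T: "C1c_test U \<phi> \<phi>'" and u: "u \<noteq> 0" and h: "h \<longlonglongrightarrow> 0" and hn: "\<And>n. h n \<noteq> 0"
    and g: "g \<in> borel_measurable borel" "\<And>z. \<bar>g z\<bar> \<le> 1"
  shows "(\<lambda>n. (\<integral>z. g z * (\<phi> (z + h n *\<^sub>R u) - \<phi> z) \<partial>lborel) / h n) \<longlonglongrightarrow> (\<integral>z. g z * \<phi>' z u \<partial>lborel)"
proof -
  have one: "(\<lambda>z. 1::real) \<in> borel_measurable borel" "\<And>z. \<bar>1::real\<bar> \<le> 1" by auto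
  have ip: "integrable lborel (\<lambda>z. g z * \<phi> (z + c))" for c by (rule C1c_integrable[OF T g])
  have ip1: "integrable lborel (\<lambda>z. \<phi> (z + c))" for c using C1c_integrable[OF T one, of c] by simp
  have id: "integrable lborel (\<lambda>z. g z * \<phi>' z u)" by (rule C1c_integrable_d[OF T g])
  have id1: "integrable lborel (\<lambda>z. \<phi>' z u)" using C1c_integrable_d[OF T one, of u] by simp
  define D where "D n z = (\<phi> (z + h n *\<^sub>R u) - \<phi> (z + 0)) / h n - \<phi>' z u" for n z
  have iD: "integrable lborel (\<lambda>z. \<bar>D n z\<bar>)" for n
    unfolding D_def by (intro integrable_abs Bochner_Integration.integrable_diff integrable_divide_zero ip1 id1)
  have eq: "(\<integral>z. g z * (\<phi> (z + h n *\<^sub>R u) - \<phi> z) \<partial>lborel) / h n - (\<integral>z. g z * \<phi>' z u \<partial>lborel)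
      = (\<integral>z. (g z * \<phi> (z + h n *\<^sub>R u) - g z * \<phi> (z + 0)) / h n - g z * \<phi>' z u \<partial>lborel)" for n
  proof -
    have "(\<integral>z. g z * (\<phi> (z + h n *\<^sub>R u) - \<phi> z) \<partial>lborel) = (\<integral>z. g z * \<phi> (z + h n *\<^sub>R u) - g z * \<phi> (z + 0) \<partial>lborel)"
      by (simp add: algebra_simps)
    also have "\<dots> = (\<integral>z. g z * \<phi> (z + h n *\<^sub>R u) \<partial>lborel) - (\<integral>z. g z * \<phi> (z + 0) \<partial>lborel)"
      by (rule Bochner_Integration.integral_diff[OF ip ip])
    finally have a: "(\<integral>z. g z * (\<phi> (z + h n *\<^sub>R u) - \<phi> z) \<partial>lborel) =
       (\<integral>z. g z * \<phi> (z + h n *\<^sub>R u) \<partial>lborel) - (\<integral>z. g z * \<phi> (z + 0) \<partial>lborel)" .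
    have b: "(\<integral>z. (g z * \<phi> (z + h n *\<^sub>R u) - g z * \<phi> (z + 0)) / h n - g z * \<phi>' z u \<partial>lborel)
      = (\<integral>z. (g z * \<phi> (z + h n *\<^sub>R u) - g z * \<phi> (z + 0)) / h n \<partial>lborel) - (\<integral>z. g z * \<phi>' z u \<partial>lborel)"
      by (rule Bochner_Integration.integral_diff)
         (intro integrable_divide_zero Bochner_Integration.integrable_diff ip, rule id)
    have c: "(\<integral>z. (g z * \<phi> (z + h n *\<^sub>R u) - g z * \<phi> (z + 0)) / h n \<partial>lborel)
       = ((\<integral>z. g z * \<phi> (z + h n *\<^sub>R u) \<partial>lborel) - (\<integral>z. g z * \<phi> (z + 0) \<partial>lborel)) / h n"
      by (simp only: integral_divide_zero Bochner_Integration.integral_diff[OF ip ip])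
    show ?thesis unfolding a b c ..
  qed
  have bnd: "\<bar>(\<integral>z. (g z * \<phi> (z + h n *\<^sub>R u) - g z * \<phi> (z + 0)) / h n - g z * \<phi>' z u \<partial>lborel)\<bar>
      \<le> (\<integral>z. \<bar>D n z\<bar> \<partial>lborel)" for n
  proof (rule integral_abs_bound_integral)
    show "integrable lborel (\<lambda>z. (g z * \<phi> (z + h n *\<^sub>R u) - g z * \<phi> (z + 0)) / h n - g z * \<phi>' z u)"
      by (intro Bochner_Integration.integrable_diff integrable_divide_zero ip id)
    show "integrable lborel (\<lambda>z. \<bar>D n z\<bar>)" by (rule iD)
    fix z
    have "(g z * \<phi> (z + h n *\<^sub>R u) - g z * \<phi> (z + 0)) / h n - g z * \<phi>' z u = g z * D n z"
      unfolding D_def by (simp add: algebra_simps diff_divide_distrib)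
    then show "\<bar>(g z * \<phi> (z + h n *\<^sub>R u) - g z * \<phi> (z + 0)) / h n - g z * \<phi>' z u\<bar> \<le> \<bar>D n z\<bar>"
      using g(2)[of z] by (simp add: abs_mult mult_left_le_one_le)
  qed
  have lim0: "(\<lambda>n. \<integral>z. \<bar>D n z\<bar> \<partial>lborel) \<longlonglongrightarrow> 0"
    using DQ[OF T u h hn] unfolding D_def by simp
  have "(\<lambda>n. (\<integral>z. g z * (\<phi> (z + h n *\<^sub>R u) - \<phi> z) \<partial>lborel) / h n - (\<integral>z. g z * \<phi>' z u \<partial>lborel)) \<longlonglongrightarrow> 0"
    by (rule Lim_null_comparison[OF _ lim0]) (use bnd eq in \<open>auto intro!: always_eventually\<close>)
  then show ?thesis by (rule LIM_zero_cancel)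
qed


lemma C1c_int_eq:
  fixes A :: "'a::euclidean_space set"
  assumes T: "C1c_test U \<phi> \<phi>'" and A: "A \<in> sets borel"
  shows "(\<integral>x. indicator (A \<inter> U) x * \<phi>' x u \<partial>lebesgue) = (\<integral>x. indicator A x * \<phi>' x u \<partial>lborel)"
proof -
  have "(\<integral>x. indicator (A \<inter> U) x * \<phi>' x u \<partial>lebesgue) = (\<integral>x. indicator A x * \<phi>' x u \<partial>lebesgue)"
  proof (intro Bochner_Integration.integral_cong refl)
    fix x
    show "indicator (A \<inter> U) x * \<phi>' x u = indicator A x * \<phi>' x u"
    proof (cases "x \<in> closure {x. \<phi> x \<noteq> 0}")
      case True
      then have "x \<in> U" using T unfolding C1c_test_def by blast
      then show ?thesis by (simp add: indicator_def)
    next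
      case False then show ?thesis using C1c_deriv_zero[OF T False] by simp
    qed
  qed
  also have "\<dots> = (\<integral>x. indicator A x * \<phi>' x u \<partial>lborel)"
    by (rule integral_completion) (use A C1c_meas(2)[OF T, of u] in measurable)
  finally show ?thesis .
qed

lemma sigma_integrable:
  fixes A W :: "'a::euclidean_space set"
  assumes A: "A \<in> sets borel" and W: "admissible_window W"
  shows "integrable lborel (\<lambda>z. indicator (Er W v) z * \<bar>indicator A z - indicator A (z - v)\<bar> :: real)"
proof -
  note Ep = Er_props[OF W, of v]
  let ?E = "Er W v"
  have m: "(\<lambda>z. indicator ?E z * \<bar>indicator A z - indicator A (z - v)\<bar> :: real) \<in> borel_measurable borel"
    using A Ep by measurable
  show ?thesis
    by (rule integrable_bdd_set[where E="?E" and c=1]) (use m Ep in \<open>auto simp: indicator_def\<close>)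
qed

lemma det2:
  fixes A W :: "'a::euclidean_space set" and u :: 'a
  assumes A: "A \<in> sets borel" and W: "admissible_window W" and u: "norm u = 1"
    and h: "h \<longlonglongrightarrow> 0" and hp: "\<And>n. h n > 0"
  shows "dir_variation u A W \<le> liminf (\<lambda>n. ereal (sigma_fun (h n *\<^sub>R u) W A))"
  unfolding dir_variation_def
proof (rule SUP_least)
  fix p assume "p \<in> {(\<phi>, \<phi>'). C1c_test W \<phi> \<phi>'}"
  then obtain \<phi> \<phi>' where p: "p = (\<phi>, \<phi>')" and T: "C1c_test W \<phi> \<phi>'" by auto
  have u0: "u \<noteq> 0" using u by auto
  have hn: "h n \<noteq> 0" for n using hp[of n] by simp
  have mA: "(indicator A :: 'a \<Rightarrow> real) \<in> borel_measurable borel" using A by simp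
  have bA: "\<bar>indicator A z :: real\<bar> \<le> 1" for z by (simp add: indicator_def)
  define J where "J = (\<integral>x. indicator A x * \<phi>' x u \<partial>lborel)"
  define q where "q n = (\<integral>z. indicator A z * (\<phi> (z + h n *\<^sub>R u) - \<phi> z) \<partial>lborel) / h n" for n
  have qJ: "q \<longlonglongrightarrow> J" unfolding q_def J_def by (rule DQg[OF T u0 h hn mA bA])
  let ?K = "closure {x. \<phi> x \<noteq> 0}"
  have K: "compact ?K" "?K \<subseteq> W" using T unfolding C1c_test_def by auto
  have oW: "open W" using W by (simp add: admissible_window_def)
  obtain \<delta> where \<delta>: "\<delta> > 0" "(\<Union>x\<in>?K. cball x \<delta>) \<subseteq> W"
    using compact_subset_open_imp_cball_epsilon_subset[OF K(1) oW K(2)] by blast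
  have ev: "eventually (\<lambda>n. h n < \<delta>) sequentially"
    using order_tendstoD(2)[OF h \<delta>(1)] .
  have qs: "q n \<le> sigma_fun (h n *\<^sub>R u) W A" if hd: "h n < \<delta>" for n
  proof -
    define v where "v = h n *\<^sub>R u"
    have nv: "norm v = h n" using hp[of n] u by (simp add: v_def)
    have v0: "v \<noteq> 0" using nv hp[of n] by auto
    have KE: "?K \<subseteq> Er W v"
    proof
      fix x assume x: "x \<in> ?K"
      show "x \<in> Er W v" unfolding Er_def erosion_seg_iff
      proof
        fix c assume "c \<in> closed_segment (- v) 0"
        then have "c \<in> closed_segment 0 (- v)" by (simp add: closed_segment_commute)
        then have "norm (c - 0) \<le> norm (- v - 0)" by (rule segment_bound1)
        then have "dist x (x + c) \<le> \<delta>" using nv hd by (simp add: dist_norm)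
        then have "x + c \<in> cball x \<delta>" by (simp add: mem_cball)
        moreover have "cball x \<delta> \<subseteq> W" using \<delta>(2) x by blast
        ultimately show "x + c \<in> W" by (rule subsetD[rotated])
      qed
    qed
    have "h n * q n = (\<integral>z. indicator A z * (\<phi> (z + v) - \<phi> z) \<partial>lborel)"
      unfolding q_def v_def using hn[of n] by simp
    also have "\<dots> = (\<integral>z. (indicator A (z - v) - indicator A z) * \<phi> z \<partial>lborel)"
      by (rule shift_identity[OF T A])
    also have "\<dots> \<le> (\<integral>z. indicator (Er W v) z * \<bar>indicator A z - indicator A (z - v)\<bar> \<partial>lborel)"
    proof (rule Bochner_Integration.integral_mono)
      show "integrable lborel (\<lambda>z. (indicator A (z - v) - indicator A z) * \<phi> z :: real)"
        using C1c_integrable[OF T, of "\<lambda>z. indicator A (z - v) - indicator A z" 0] A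
        by (simp add: indicator_def)
      show "integrable lborel (\<lambda>z. indicator (Er W v) z * \<bar>indicator A z - indicator A (z - v)\<bar> :: real)"
        by (rule sigma_integrable[OF A W])
      fix z
      show "(indicator A (z - v) - indicator A z) * \<phi> z \<le> indicator (Er W v) z * \<bar>indicator A z - indicator A (z - v)\<bar>"
      proof (cases "z \<in> ?K")
        case True
        then have "z \<in> Er W v" using KE by blast
        have "\<bar>\<phi> z\<bar> \<le> 1" by (rule C1c_abs[OF T])
        have "(indicator A (z - v) - indicator A z) * \<phi> z \<le> \<bar>(indicator A (z - v) - indicator A z) * \<phi> z\<bar>"
          by (rule abs_ge_self)
        also have "\<dots> = \<bar>indicator A (z - v) - indicator A z\<bar> * \<bar>\<phi> z\<bar>" by (rule abs_mult)
        also have "\<dots> \<le> \<bar>indicator A (z - v) - indicator A z\<bar>"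
          using \<open>\<bar>\<phi> z\<bar> \<le> 1\<close> by (intro mult_left_le) auto
        also have "\<dots> = indicator (Er W v) z * \<bar>indicator A z - indicator A (z - v)\<bar>"
          using \<open>z \<in> Er W v\<close> by (simp add: abs_minus_commute)
        finally show ?thesis .
      next
        case False
        then have "\<phi> z = 0" by (rule C1c_zero)
        then show ?thesis by simp
      qed
    qed
    also have "\<dots> = norm v * sigma_fun v W A" by (rule sigma_formula[OF A W v0, symmetric])
    finally have "h n * q n \<le> h n * sigma_fun v W A" unfolding nv .
    then show ?thesis unfolding v_def using hp[of n] by simp
  qed
  have "ereal (\<integral>x. indicator (A \<inter> W) x * snd p x u \<partial>lebesgue) = ereal J"
    unfolding p J_def using C1c_int_eq[OF T A] by simp
  also have "\<dots> = liminf (\<lambda>n. ereal (q n))"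
    by (rule lim_imp_Liminf[symmetric]) (use qJ in auto)
  also have "\<dots> \<le> liminf (\<lambda>n. ereal (sigma_fun (h n *\<^sub>R u) W A))"
  proof (rule Liminf_mono)
    show "\<forall>\<^sub>F n in sequentially. ereal (q n) \<le> ereal (sigma_fun (h n *\<^sub>R u) W A)"
      using ev by (rule eventually_mono) (simp add: qs)
  qed
  finally show "ereal (\<integral>x. indicator (A \<inter> W) x * snd p x u \<partial>lebesgue) \<le> liminf (\<lambda>n. ereal (sigma_fun (h n *\<^sub>R u) W A))" .
qed


lemma sqpos_deriv: "((\<lambda>t::real. (max 0 t)\<^sup>2) has_field_derivative 2 * max 0 x) (at x)"
proof -
  consider "x > 0" | "x < 0" | "x = 0" by linarith
  then show ?thesis
  proof cases
    case 1
    have "((\<lambda>t::real. t\<^sup>2) has_field_derivative 2 * max 0 x) (at x)"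
      using 1 by (auto intro!: derivative_eq_intros)
    then show ?thesis
      by (rule has_field_derivative_transform_within_open[of _ _ _ "{0<..}"]) (use 1 in auto)
  next
    case 2
    have "((\<lambda>t::real. 0) has_field_derivative 2 * max 0 x) (at x)" using 2 by simp
    then show ?thesis
      by (rule has_field_derivative_transform_within_open[of _ _ _ "{..<0}"]) (use 2 in auto)
  next
    case 3
    have "((\<lambda>y. ((max 0 y)\<^sup>2 - (max 0 0)\<^sup>2) / (y - 0)) \<longlongrightarrow> 0) (at (0::real))"
    proof (rule Lim_null_comparison)
      show "\<forall>\<^sub>F y in at 0. norm (((max 0 y)\<^sup>2 - (max 0 0)\<^sup>2) / (y - 0)) \<le> \<bar>y\<bar>"
      proof (rule always_eventually, rule allI)
        fix y :: real
        show "norm (((max 0 y)\<^sup>2 - (max 0 0)\<^sup>2) / (y - 0)) \<le> \<bar>y\<bar>"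
        proof (cases "y > 0")
          case True
          then have "((max 0 y)\<^sup>2 - (max 0 0)\<^sup>2) / (y - 0) = y" by (simp add: power2_eq_square)
          then show ?thesis by simp
        next
          case False
          then have "max 0 y = 0" by simp
          then show ?thesis by simp
        qed
      qed
      show "((\<lambda>y::real. \<bar>y\<bar>) \<longlongrightarrow> 0) (at 0)"
        using tendsto_rabs[OF tendsto_ident_at[of 0 UNIV]] by simp
    qed
    then show ?thesis using 3 by (simp add: DERIV_def)
  qed
qed

lemma bump_deriv:
  fixes c :: "'a::euclidean_space"
  shows "((\<lambda>x. (max 0 (\<rho> - (x - c) \<bullet> (x - c)))\<^sup>2) has_derivative
          (\<lambda>k. 2 * max 0 (\<rho> - (x - c) \<bullet> (x - c)) * (- (2 * ((x - c) \<bullet> k))))) (at x)"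
proof -
  have g: "((\<lambda>x. \<rho> - (x - c) \<bullet> (x - c)) has_derivative (\<lambda>k. - (2 * ((x - c) \<bullet> k)))) (at x)"
  proof -
    have d1: "((\<lambda>x. x - c) has_derivative (\<lambda>k. k)) (at x)"
      using has_derivative_diff[OF has_derivative_ident has_derivative_const[of c]] by simp
    have "((\<lambda>x. (x - c) \<bullet> (x - c)) has_derivative (\<lambda>k. (x - c) \<bullet> k + k \<bullet> (x - c))) (at x)"
      by (rule bounded_bilinear.FDERIV[OF bounded_bilinear_inner d1 d1])
    then have "((\<lambda>x. \<rho> - (x - c) \<bullet> (x - c)) has_derivative (\<lambda>k. 0 - ((x - c) \<bullet> k + k \<bullet> (x - c)))) (at x)"
      by (rule has_derivative_diff[OF has_derivative_const])
    moreover have "(\<lambda>k. 0 - ((x - c) \<bullet> k + k \<bullet> (x - c))) = (\<lambda>k. - (2 * ((x - c) \<bullet> k)))"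
      by (rule ext) (simp add: inner_commute)
    ultimately show ?thesis by simp
  qed
  have q: "((\<lambda>t::real. (max 0 t)\<^sup>2) has_derivative (*) (2 * max 0 (\<rho> - (x - c) \<bullet> (x - c)))) (at (\<rho> - (x - c) \<bullet> (x - c)))"
    by (rule has_field_derivative_imp_has_derivative[OF sqpos_deriv])
  from has_derivative_compose[OF g q] show ?thesis by (simp add: o_def)
qed


lemma frac_deriv:
  assumes "s + \<eta> \<noteq> (0::real)"
  shows "((\<lambda>s. s / (s + \<eta>)) has_field_derivative \<eta> / (s + \<eta>)\<^sup>2) (at s)"
proof -
  have "((\<lambda>s. s / (s + \<eta>)) has_field_derivative (1 * (s + \<eta>) - s * (1 + 0)) / ((s + \<eta>) * (s + \<eta>))) (at s)"
    by (rule DERIV_divide[OF DERIV_ident DERIV_add[OF DERIV_ident DERIV_const] assms])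
  moreover have "(1 * (s + \<eta>) - s * (1 + 0)) / ((s + \<eta>) * (s + \<eta>)) = \<eta> / (s + \<eta>)\<^sup>2"
    by (simp add: power2_eq_square)
  ultimately show ?thesis by (simp only:)
qed

lemma urysohn_C1:
  fixes K U :: "'a::euclidean_space set"
  assumes K: "compact K" and U: "open U" and KU: "K \<subseteq> U" and th: "\<theta> > 0"
  obtains ch ch' where "C1c_test U ch ch'" "\<And>x. 0 \<le> ch x" "\<And>x. x \<in> K \<Longrightarrow> 1 - \<theta> \<le> ch x"
proof -
  obtain \<epsilon> where \<epsilon>: "\<epsilon> > 0" "(\<Union>x\<in>K. cball x \<epsilon>) \<subseteq> U"
    using compact_subset_open_imp_cball_epsilon_subset[OF K U KU] by blast
  define \<delta> where "\<delta> = \<epsilon> / 2"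
  have \<delta>: "\<delta> > 0" using \<epsilon> by (simp add: \<delta>_def)
  obtain C where C: "C \<subseteq> K" "finite C" "K \<subseteq> (\<Union>c\<in>C. ball c \<delta>)"
  proof (rule compactE_image[OF K, of K "\<lambda>c. ball c \<delta>"])
    show "K \<subseteq> (\<Union>c\<in>K. ball c \<delta>)" using \<delta> by force
  qed auto
  define \<rho> where "\<rho> = (2 * \<delta>)\<^sup>2"
  define b where "b c x = (max 0 (\<rho> - (x - c) \<bullet> (x - c)))\<^sup>2" for c x :: 'a
  define b' where "b' c x k = 2 * max 0 (\<rho> - (x - c) \<bullet> (x - c)) * (- (2 * ((x - c) \<bullet> k)))" for c x k :: 'a
  define S where "S x = (\<Sum>c\<in>C. b c x)" for x
  define S' where "S' x k = (\<Sum>c\<in>C. b' c x k)" for x k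
  define m where "m = (\<rho> - \<delta>\<^sup>2)\<^sup>2"
  define \<eta> where "\<eta> = m * \<theta>"
  define ch where "ch x = S x / (S x + \<eta>)" for x
  define ch' where "ch' x k = \<eta> / (S x + \<eta>)\<^sup>2 * S' x k" for x k
  have b0: "b c x \<ge> 0" for c x unfolding b_def by simp
  have S0: "S x \<ge> 0" for x unfolding S_def by (intro sum_nonneg b0)
  have \<rho>\<delta>: "\<rho> - \<delta>\<^sup>2 > 0" unfolding \<rho>_def using \<delta> by (simp add: power2_eq_square)
  have m0: "m > 0" unfolding m_def using \<rho>\<delta> by simp
  have \<eta>0: "\<eta> > 0" unfolding \<eta>_def using m0 th by simp
  have Sn: "S x + \<eta> > 0" for x using S0[of x] \<eta>0 by linarith
  have Sn2: "(S x + \<eta>)\<^sup>2 \<noteq> 0" for x using Sn[of x] by simp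
  have dS: "(S has_derivative S' x) (at x)" for x
    unfolding S_def[abs_def] S'_def b_def b'_def
    by (rule has_derivative_sum) (rule bump_deriv)
  have dchi: "(ch has_derivative ch' x) (at x)" for x
  proof -
    have F: "((\<lambda>s. s / (s + \<eta>)) has_derivative (*) (\<eta> / (S x + \<eta>)\<^sup>2)) (at (S x))"
      by (rule has_field_derivative_imp_has_derivative[OF frac_deriv]) (use Sn[of x] in simp)
    from has_derivative_compose[OF dS F] show ?thesis
      unfolding ch_def[abs_def] ch'_def[abs_def] by (simp add: o_def)
  qed
  have cS: "continuous_on UNIV S" unfolding S_def[abs_def] b_def
    by (intro continuous_intros)
  have cchi': "continuous_on UNIV (\<lambda>x. ch' x v)" for v
  proof -
    have "continuous_on UNIV (\<lambda>x. S' x v)" unfolding S'_def b'_def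
      by (intro continuous_intros)
    then show ?thesis unfolding ch'_def
      by (intro continuous_intros cS) (use Sn2 in simp)
  qed
  have supp: "{x. ch x \<noteq> 0} \<subseteq> (\<Union>c\<in>C. cball c (2 * \<delta>))"
  proof
    fix x assume "x \<in> {x. ch x \<noteq> 0}"
    then have "S x \<noteq> 0" unfolding ch_def by auto
    then obtain c where c: "c \<in> C" "b c x \<noteq> 0" unfolding S_def by (meson sum.neutral)
    then have "(x - c) \<bullet> (x - c) < \<rho>" unfolding b_def by (auto simp: max_def split: if_splits)
    then have "(norm (x - c))\<^sup>2 < (2 * \<delta>)\<^sup>2" unfolding \<rho>_def by (simp add: power2_norm_eq_inner)
    then have "norm (x - c) < 2 * \<delta>" using \<delta> by (smt (verit) power_mono norm_ge_zero)
    then have "x \<in> cball c (2 * \<delta>)" by (simp add: dist_norm norm_minus_commute)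
    then show "x \<in> (\<Union>c\<in>C. cball c (2 * \<delta>))" using c by blast
  qed
  have cU: "compact (\<Union>c\<in>C. cball c (2 * \<delta>))" using C(2) by (intro compact_UN) auto
  have cl: "closure {x. ch x \<noteq> 0} \<subseteq> (\<Union>c\<in>C. cball c (2 * \<delta>))"
    by (rule closure_minimal[OF supp compact_imp_closed[OF cU]])
  have sub: "(\<Union>c\<in>C. cball c (2 * \<delta>)) \<subseteq> U"
    using \<epsilon>(2) C(1) unfolding \<delta>_def by auto
  have comp: "compact (closure {x. ch x \<noteq> 0})"
    using cl cU by (meson bounded_subset compact_eq_bounded_closed closed_closure compact_imp_bounded)
  have chi01: "0 \<le> ch x \<and> ch x \<le> 1" for x
    unfolding ch_def using S0[of x] Sn[of x] \<eta>0 by (simp add: divide_le_eq_1)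
  show ?thesis
  proof (rule that[of ch ch'])
    show "C1c_test U ch ch'" unfolding C1c_test_def
      using dchi cchi' comp cl sub chi01 by (auto simp: abs_le_iff)
    show "0 \<le> ch x" for x using chi01 by blast
    fix x assume "x \<in> K"
    then obtain c where c: "c \<in> C" "x \<in> ball c \<delta>" using C(3) by blast
    then have "norm (x - c) < \<delta>" by (simp add: dist_norm norm_minus_commute)
    then have "(x - c) \<bullet> (x - c) \<le> \<delta>\<^sup>2"
      by (simp add: power2_norm_eq_inner[symmetric] power_mono less_imp_le)
    then have "m \<le> b c x" unfolding m_def b_def using \<rho>\<delta> by (intro power_mono) auto
    also have "b c x \<le> S x" unfolding S_def using c(1) C(2) b0 by (intro member_le_sum) auto
    finally have mS: "m \<le> S x" .
    have "1 - \<theta> \<le> 1 / (1 + \<theta>)" using th by (simp add: field_simps)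
    also have "1 / (1 + \<theta>) = m / (m + \<eta>)"
    proof -
      have e: "m + \<eta> = m * (1 + \<theta>)" unfolding \<eta>_def by (simp add: algebra_simps)
      show ?thesis unfolding e using m0 by simp
    qed
    also have "m / (m + \<eta>) \<le> S x / (S x + \<eta>)"
      using mS m0 \<eta>0 by (simp add: frac_le_eq field_simps mult_right_mono)
    finally show "1 - \<theta> \<le> ch x" unfolding ch_def .
  qed
qed


lemma Qbound:
  fixes \<phi> :: "'a::euclidean_space \<Rightarrow> real"
  assumes T: "C1c_test U \<phi> \<phi>'" and g: "g \<in> borel_measurable borel" "\<And>z. \<bar>g z\<bar> \<le> 1" and hh: "hh \<noteq> 0"
  shows "\<bar>(\<integral>z. g z * (\<phi> (z + hh *\<^sub>R u) - \<phi> z) \<partial>lborel) / hh - (\<integral>z. g z * \<phi>' z u \<partial>lborel)\<bar>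
     \<le> (\<integral>z. \<bar>(\<phi> (z + hh *\<^sub>R u) - \<phi> z) / hh - \<phi>' z u\<bar> \<partial>lborel)"
proof -
  have one: "(\<lambda>z. 1::real) \<in> borel_measurable borel" "\<And>z. \<bar>1::real\<bar> \<le> 1" by auto
  have ip: "integrable lborel (\<lambda>z. g z * \<phi> (z + c))" for c by (rule C1c_integrable[OF T g])
  have ip1: "integrable lborel (\<lambda>z. \<phi> (z + c))" for c using C1c_integrable[OF T one, of c] by simp
  have id: "integrable lborel (\<lambda>z. g z * \<phi>' z u)" by (rule C1c_integrable_d[OF T g])
  have id1: "integrable lborel (\<lambda>z. \<phi>' z u)" using C1c_integrable_d[OF T one, of u] by simp
  define D where "D z = (\<phi> (z + hh *\<^sub>R u) - \<phi> (z + 0)) / hh - \<phi>' z u" for z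
  have iD: "integrable lborel (\<lambda>z. \<bar>D z\<bar>)"
    unfolding D_def by (intro integrable_abs Bochner_Integration.integrable_diff integrable_divide_zero ip1 id1)
  have eq: "(\<integral>z. g z * (\<phi> (z + hh *\<^sub>R u) - \<phi> z) \<partial>lborel) / hh - (\<integral>z. g z * \<phi>' z u \<partial>lborel)
      = (\<integral>z. (g z * \<phi> (z + hh *\<^sub>R u) - g z * \<phi> (z + 0)) / hh - g z * \<phi>' z u \<partial>lborel)"
  proof -
    have "(\<integral>z. g z * (\<phi> (z + hh *\<^sub>R u) - \<phi> z) \<partial>lborel) = (\<integral>z. g z * \<phi> (z + hh *\<^sub>R u) - g z * \<phi> (z + 0) \<partial>lborel)"
      by (simp add: algebra_simps)
    also have "\<dots> = (\<integral>z. g z * \<phi> (z + hh *\<^sub>R u) \<partial>lborel) - (\<integral>z. g z * \<phi> (z + 0) \<partial>lborel)"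
      by (rule Bochner_Integration.integral_diff[OF ip ip])
    finally have a: "(\<integral>z. g z * (\<phi> (z + hh *\<^sub>R u) - \<phi> z) \<partial>lborel) =
       (\<integral>z. g z * \<phi> (z + hh *\<^sub>R u) \<partial>lborel) - (\<integral>z. g z * \<phi> (z + 0) \<partial>lborel)" .
    have b: "(\<integral>z. (g z * \<phi> (z + hh *\<^sub>R u) - g z * \<phi> (z + 0)) / hh - g z * \<phi>' z u \<partial>lborel)
      = (\<integral>z. (g z * \<phi> (z + hh *\<^sub>R u) - g z * \<phi> (z + 0)) / hh \<partial>lborel) - (\<integral>z. g z * \<phi>' z u \<partial>lborel)"
      by (rule Bochner_Integration.integral_diff)
         (intro integrable_divide_zero Bochner_Integration.integrable_diff ip, rule id)
    have c: "(\<integral>z. (g z * \<phi> (z + hh *\<^sub>R u) - g z * \<phi> (z + 0)) / hh \<partial>lborel)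
       = ((\<integral>z. g z * \<phi> (z + hh *\<^sub>R u) \<partial>lborel) - (\<integral>z. g z * \<phi> (z + 0) \<partial>lborel)) / hh"
      by (simp only: integral_divide_zero Bochner_Integration.integral_diff[OF ip ip])
    show ?thesis unfolding a b c ..
  qed
  have bnd: "\<bar>(\<integral>z. (g z * \<phi> (z + hh *\<^sub>R u) - g z * \<phi> (z + 0)) / hh - g z * \<phi>' z u \<partial>lborel)\<bar>
      \<le> (\<integral>z. \<bar>D z\<bar> \<partial>lborel)"
  proof (rule integral_abs_bound_integral)
    show "integrable lborel (\<lambda>z. (g z * \<phi> (z + hh *\<^sub>R u) - g z * \<phi> (z + 0)) / hh - g z * \<phi>' z u)"
      by (intro Bochner_Integration.integrable_diff integrable_divide_zero ip id)
    show "integrable lborel (\<lambda>z. \<bar>D z\<bar>)" by (rule iD)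
    fix z
    have "(g z * \<phi> (z + hh *\<^sub>R u) - g z * \<phi> (z + 0)) / hh - g z * \<phi>' z u = g z * D z"
      unfolding D_def by (simp add: algebra_simps diff_divide_distrib)
    then show "\<bar>(g z * \<phi> (z + hh *\<^sub>R u) - g z * \<phi> (z + 0)) / hh - g z * \<phi>' z u\<bar> \<le> \<bar>D z\<bar>"
      using g(2)[of z] by (simp add: abs_mult mult_left_le_one_le)
  qed
  show ?thesis using eq bnd unfolding D_def by simp
qed

lemma Rtrans:
  fixes \<psi> :: "'a::euclidean_space \<Rightarrow> real"
  assumes T: "C1c_test U \<psi> \<psi>'" and hh: "hh \<noteq> 0"
  shows "(\<integral>z. \<bar>(\<psi> (z + c + hh *\<^sub>R u) - \<psi> (z + c)) / hh - \<psi>' (z + c) u\<bar> \<partial>lborel)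
       = (\<integral>z. \<bar>(\<psi> (z + hh *\<^sub>R u) - \<psi> z) / hh - \<psi>' z u\<bar> \<partial>lborel)"
proof -
  have m: "(\<lambda>z. \<bar>(\<psi> (z + hh *\<^sub>R u) - \<psi> z) / hh - \<psi>' z u\<bar>) \<in> borel_measurable borel"
  proof -
    have "continuous_on UNIV (\<lambda>z. \<psi> (z + hh *\<^sub>R u))" "continuous_on UNIV (\<lambda>z. \<psi> (z + 0))"
      by (rule C1c_cont[OF T])+
    moreover have "continuous_on UNIV (\<lambda>x. \<psi>' x u)" using T unfolding C1c_test_def by blast
    ultimately have "continuous_on UNIV (\<lambda>z. \<bar>(\<psi> (z + hh *\<^sub>R u) - \<psi> (z + 0)) / hh - \<psi>' z u\<bar>)"
      by (intro continuous_intros) (auto simp: hh)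
    then show ?thesis by (simp add: borel_measurable_continuous_onI)
  qed
  show ?thesis
    by (subst integral_translate[OF m, of c]) (simp add: algebra_simps)
qed

lemma shift_test:
  fixes \<psi> :: "'a::euclidean_space \<Rightarrow> real"
  assumes T: "C1c_test (Er W (t *\<^sub>R u)) \<psi> \<psi>'" and s: "0 \<le> s" "s \<le> t" and t: "t > 0"
  shows "C1c_test W (\<lambda>z. \<psi> (z + s *\<^sub>R u)) (\<lambda>z. \<psi>' (z + s *\<^sub>R u))"
proof (rule C1c_shift[OF T])
  show "(\<lambda>x. x - s *\<^sub>R u) ` closure {x. \<psi> x \<noteq> 0} \<subseteq> W"
  proof
    fix y assume "y \<in> (\<lambda>x. x - s *\<^sub>R u) ` closure {x. \<psi> x \<noteq> 0}"
    then obtain x where x: "x \<in> closure {x. \<psi> x \<noteq> 0}" and y: "y = x - s *\<^sub>R u" by blast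
    have xE: "x \<in> Er W (t *\<^sub>R u)" using x T unfolding C1c_test_def by blast
    have "- (s *\<^sub>R u) \<in> closed_segment (- (t *\<^sub>R u)) 0"
      unfolding in_segment
      by (rule exI[of _ "1 - s / t"]) (use s t in \<open>auto simp: field_simps\<close>)
    then have "x + - (s *\<^sub>R u) \<in> W" using xE unfolding Er_def erosion_seg_iff by blast
    then show "y \<in> W" using y by simp
  qed
qed


lemma tele:
  fixes A W :: "'a::euclidean_space set" and u :: 'a and \<psi> :: "'a \<Rightarrow> real"
  assumes A: "A \<in> sets borel" and W: "admissible_window W" and u: "norm u = 1" and t: "t > 0"
    and V: "dir_variation u A W = ereal r"
    and T: "C1c_test (Er W (t *\<^sub>R u)) \<psi> \<psi>'"
  shows "(\<integral>z. (indicator A z - indicator A (z - t *\<^sub>R u)) * \<psi> z \<partial>lborel) \<le> t * r"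
proof -
  have u0: "u \<noteq> 0" using u by auto
  have mA: "(indicator A :: 'a \<Rightarrow> real) \<in> borel_measurable borel" using A by simp
  have bA: "\<bar>indicator A z :: real\<bar> \<le> 1" for z by (simp add: indicator_def)
  define R where "R hh = (\<integral>z. \<bar>(\<psi> (z + hh *\<^sub>R u) - \<psi> z) / hh - \<psi>' z u\<bar> \<partial>lborel)" for hh
  define L where "L = (\<integral>z. (indicator A z - indicator A (z - t *\<^sub>R u)) * \<psi> z \<partial>lborel)"
  have a: "L = (\<integral>z. indicator A z * (\<psi> z - \<psi> (z + t *\<^sub>R u)) \<partial>lborel)"
  proof -
    have e1: "(\<lambda>z. (indicator A z - indicator A (z - t *\<^sub>R u)) * \<psi> z :: real)
        = (\<lambda>z. - ((indicator A (z - t *\<^sub>R u) - indicator A z) * \<psi> z))"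
      by (rule ext) (simp add: algebra_simps)
    have e2: "(\<lambda>z. indicator A z * (\<psi> z - \<psi> (z + t *\<^sub>R u)) :: real)
        = (\<lambda>z. - (indicator A z * (\<psi> (z + t *\<^sub>R u) - \<psi> z)))"
      by (rule ext) (simp add: algebra_simps)
    show ?thesis unfolding L_def e1 e2 Bochner_Integration.integral_minus shift_identity[OF T A] ..
  qed
  have main: "L \<le> t * r + t * R (t / real n)" if n: "n > 0" for n
  proof -
    define h where "h = t / real n"
    have h0: "h > 0" using t n by (simp add: h_def)
    have nh: "real n * h = t" using n by (simp add: h_def)
    define f where "f k z = \<psi> (z + (real k * h) *\<^sub>R u)" for k z
    have b: "indicator A z * (\<psi> z - \<psi> (z + t *\<^sub>R u)) = (\<Sum>k<n. indicator A z * (f k z - f (Suc k) z))" for z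
    proof -
      have "(\<Sum>k<n. f k z - f (Suc k) z) = f 0 z - f n z" by (rule sum_lessThan_telescope')
      also have "\<dots> = \<psi> z - \<psi> (z + t *\<^sub>R u)" unfolding f_def nh by simp
      finally have tel: "(\<Sum>k<n. f k z - f (Suc k) z) = \<psi> z - \<psi> (z + t *\<^sub>R u)" .
      show ?thesis by (simp only: sum_distrib_left[symmetric] tel)
    qed
    have ik: "integrable lborel (\<lambda>z. indicator A z * (f k z - f (Suc k) z))" for k
    proof -
      have "integrable lborel (\<lambda>z. indicator A z * \<psi> (z + c))" for c by (rule C1c_integrable[OF T mA bA])
      then have "integrable lborel (\<lambda>z. indicator A z * \<psi> (z + (real k * h) *\<^sub>R u) - indicator A z * \<psi> (z + (real (Suc k) * h) *\<^sub>R u))"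
        by (intro Bochner_Integration.integrable_diff)
      then show ?thesis unfolding f_def by (simp add: algebra_simps)
    qed
    have c: "L = (\<Sum>k<n. \<integral>z. indicator A z * (f k z - f (Suc k) z) \<partial>lborel)"
      unfolding a b by (rule Bochner_Integration.integral_sum) (rule ik)
    have d: "(\<integral>z. indicator A z * (f k z - f (Suc k) z) \<partial>lborel) \<le> h * r + h * R h" if k: "k < n" for k
    proof -
      define s where "s = real k * h"
      have s1: "0 \<le> s" using h0 unfolding s_def by simp
      have "real k * h \<le> real n * h" using k h0 by (intro mult_right_mono) auto
      then have s2: "s \<le> t" using nh unfolding s_def by simp
      note s = s1 s2
      define c where "c = s *\<^sub>R u"
      have Tk: "C1c_test W (\<lambda>z. \<psi> (z + c)) (\<lambda>z. \<psi>' (z + c))" unfolding c_def by (rule shift_test[OF T s t])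
      have fk: "f k z = \<psi> (z + c)" for z unfolding f_def c_def s_def ..
      have fSk: "f (Suc k) z = \<psi> (z + h *\<^sub>R u + c)" for z
        unfolding f_def c_def s_def by (simp add: algebra_simps scaleR_left_distrib)
      define X where "X = (\<integral>z. indicator A z * (\<psi> (z + h *\<^sub>R u + c) - \<psi> (z + c)) \<partial>lborel) / h"
      define Y where "Y = (\<integral>z. indicator A z * \<psi>' (z + c) u \<partial>lborel)"
      have Q: "\<bar>X - Y\<bar> \<le> R h"
      proof -
        have "\<bar>X - Y\<bar> \<le> (\<integral>z. \<bar>(\<psi> (z + h *\<^sub>R u + c) - \<psi> (z + c)) / h - \<psi>' (z + c) u\<bar> \<partial>lborel)"
          unfolding X_def Y_def using Qbound[OF Tk mA bA, of h u] h0 by simp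
        also have "\<dots> = (\<integral>z. \<bar>(\<psi> (z + c + h *\<^sub>R u) - \<psi> (z + c)) / h - \<psi>' (z + c) u\<bar> \<partial>lborel)"
          by (simp add: ac_simps)
        also have "\<dots> = R h" unfolding R_def by (rule Rtrans[OF T]) (use h0 in simp)
        finally show ?thesis .
      qed
      have Yr: "- Y \<le> r"
      proof -
        have "ereal (\<integral>x. indicator A x * (- \<psi>' (x + c) u) \<partial>lborel) \<le> dir_variation u A W"
          by (rule C1c_var[OF C1c_neg[OF Tk] A])
        then have "(\<integral>x. indicator A x * (- \<psi>' (x + c) u) \<partial>lborel) \<le> r" using V by simp
        moreover have "(\<integral>x. indicator A x * (- \<psi>' (x + c) u) \<partial>lborel) = - Y"
        proof -
          have e: "(\<lambda>x. indicator A x * (- \<psi>' (x + c) u) :: real) = (\<lambda>x. - (indicator A x * \<psi>' (x + c) u))"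
            by (rule ext) simp
          show ?thesis unfolding Y_def e by (rule Bochner_Integration.integral_minus)
        qed
        ultimately show ?thesis by simp
      qed
      have "(\<integral>z. indicator A z * (f k z - f (Suc k) z) \<partial>lborel)
          = - (\<integral>z. indicator A z * (\<psi> (z + h *\<^sub>R u + c) - \<psi> (z + c)) \<partial>lborel)"
      proof -
        have e: "(\<lambda>z. indicator A z * (f k z - f (Suc k) z) :: real)
           = (\<lambda>z. - (indicator A z * (\<psi> (z + h *\<^sub>R u + c) - \<psi> (z + c))))"
          unfolding fk fSk by (rule ext) (simp add: algebra_simps)
        show ?thesis unfolding e by (rule Bochner_Integration.integral_minus)
      qed
      also have "\<dots> = - (h * X)" unfolding X_def using h0 by simp
      also have "\<dots> = h * (- Y) + h * (Y - X)" by (simp add: algebra_simps)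
      also have "\<dots> \<le> h * r + h * R h"
      proof (rule add_mono)
        show "h * (- Y) \<le> h * r" using mult_left_mono[OF Yr, of h] h0 by simp
        have "Y - X \<le> R h" using Q by linarith
        then show "h * (Y - X) \<le> h * R h" using h0 by (simp add: mult_left_mono)
      qed
      finally show ?thesis .
    qed
    have "L \<le> (\<Sum>k<n. h * r + h * R h)" unfolding c by (rule sum_mono) (use d in simp)
    also have "\<dots> = real n * h * r + real n * h * R h" by (simp add: algebra_simps)
    also have "\<dots> = t * r + t * R h" using nh by simp
    also have "\<dots> = t * r + t * R (t / real n)" unfolding h_def ..
    finally show ?thesis .
  qed
  define hs where "hs m = t / real (Suc m)" for m
  have hs0: "hs m \<noteq> 0" for m using t by (simp add: hs_def)
  have hsl: "hs \<longlonglongrightarrow> 0"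
  proof -
    have "(\<lambda>m. t * inverse (real (Suc m))) \<longlonglongrightarrow> t * 0"
      by (intro tendsto_mult tendsto_const LIMSEQ_inverse_real_of_nat)
    then show ?thesis unfolding hs_def by (simp add: divide_inverse)
  qed
  have Rl: "(\<lambda>m. R (hs m)) \<longlonglongrightarrow> 0" unfolding R_def by (rule DQ[OF T u0 hsl hs0])
  have "(\<lambda>m. t * r + t * R (hs m)) \<longlonglongrightarrow> t * r + t * 0"
    by (intro tendsto_add tendsto_mult tendsto_const Rl)
  then have lim: "(\<lambda>m. t * r + t * R (hs m)) \<longlonglongrightarrow> t * r" by simp
  have "L \<le> t * r"
  proof (rule LIMSEQ_le_const[OF lim], intro exI allI impI)
    fix m :: nat
    have "L \<le> t * r + t * R (t / real (Suc m))" by (rule main) simp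
    then show "L \<le> t * r + t * R (hs m)" unfolding hs_def .
  qed
  then show ?thesis unfolding L_def .
qed


lemma ptwise:
  fixes a b c1 c2 th :: real
  assumes ab: "a \<in> {0,1}" "b \<in> {0,1}" and c: "0 \<le> c1" "c1 \<le> 1" "0 \<le> c2" "c2 \<le> 1" and th: "0 \<le> th"
    and u1: "c1 \<noteq> 0 \<Longrightarrow> inUa" and u2: "c2 \<noteq> 0 \<Longrightarrow> inUb" and dj: "\<not> (inUa \<and> inUb)"
    and o1: "inUa \<Longrightarrow> inO1 \<and> inE" and o2: "inUb \<Longrightarrow> inO2 \<and> inE"
    and t1: "inT1 \<Longrightarrow> inUa \<and> inE \<and> a = 1 \<and> b = 0 \<and> 1 - th \<le> c1"
    and t2: "inT2 \<Longrightarrow> inUb \<and> inE \<and> a = 0 \<and> b = 1 \<and> 1 - th \<le> c2"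
  shows "(if inE then 1 else 0) * \<bar>a - b\<bar> - (a - b) * (c1 - c2)
    \<le> (if inE \<and> a = 1 \<and> b = 0 \<and> \<not> inT1 then 1 else 0) + (if inE \<and> a = 0 \<and> b = 1 \<and> \<not> inT2 then 1 else 0)
      + th * (if inE then 1 else 0) + (if inO1 \<and> inE \<and> \<not> inT1 then 1 else 0) + (if inO2 \<and> inE \<and> \<not> inT2 then 1 else 0)"
    (is "?L \<le> ?R1 + ?R2 + ?R3 + ?R4 + ?R5")
proof -
  have nn: "0 \<le> ?R1" "0 \<le> ?R2" "0 \<le> ?R3" "0 \<le> ?R4" "0 \<le> ?R5" using th by auto
  consider "a = b" | "a = 1" "b = 0" | "a = 0" "b = 1" using ab by auto
  then show ?thesis
  proof cases
    case 1 then have "?L = 0" by simp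
    then show ?thesis using nn by linarith
  next
    case 2
    have nt2: "\<not> inT2" using t2 2 by auto
    show ?thesis
    proof (cases inE)
      case False
      then have "c2 = 0" using u2 o2 by blast
      then have "?L \<le> 0" using 2 False c by simp
      then show ?thesis using nn by linarith
    next
      case E: True
      show ?thesis
      proof (cases inT1)
        case True
        then have "inUa" "1 - th \<le> c1" using t1 by auto
        then have "c2 = 0" using u2 dj by blast
        then have "?L \<le> th" using 2 E \<open>1 - th \<le> c1\<close> by simp
        moreover have "?R3 = th" using E by simp
        ultimately show ?thesis using nn by linarith
      next
        case nT1: False
        have r1: "?R1 = 1" using 2 E nT1 by simp
        show ?thesis
        proof (cases "c2 = 0")
          case True
          then have "?L \<le> 1" using 2 E c by simp
          then show ?thesis using nn r1 by linarith
        next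
          case False
          then have "inO2" using u2 o2 by blast
          then have "?R5 = 1" using E nt2 by simp
          moreover have "?L \<le> 2" using 2 E c by simp
          ultimately show ?thesis using nn r1 by linarith
        qed
      qed
    qed
  next
    case 3
    have nt1: "\<not> inT1" using t1 3 by auto
    show ?thesis
    proof (cases inE)
      case False
      then have "c1 = 0" using u1 o1 by blast
      then have "?L \<le> 0" using 3 False c by simp
      then show ?thesis using nn by linarith
    next
      case E: True
      show ?thesis
      proof (cases inT2)
        case True
        then have "inUb" "1 - th \<le> c2" using t2 by auto
        then have "c1 = 0" using u1 dj by blast
        then have "?L \<le> th" using 3 E \<open>1 - th \<le> c2\<close> by simp
        moreover have "?R3 = th" using E by simp
        ultimately show ?thesis using nn by linarith
      next
        case nT2: False
        have r2: "?R2 = 1" using 3 E nT2 by simp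
        show ?thesis
        proof (cases "c1 = 0")
          case True
          then have "?L \<le> 1" using 3 E c by simp
          then show ?thesis using nn r2 by linarith
        next
          case False
          then have "inO1" using u1 o1 by blast
          then have "?R4 = 1" using E nt1 by simp
          moreover have "?L \<le> 2" using 3 E c by simp
          ultimately show ?thesis using nn r2 by linarith
        qed
      qed
    qed
  qed
qed


lemma borel_leb: "(S::'a::euclidean_space set) \<in> sets borel \<Longrightarrow> S \<in> sets lebesgue"
  by simp

lemma small_measure:
  fixes S S' :: "'a::euclidean_space set"
  assumes "S \<in> sets borel" "S \<subseteq> S'" "S' \<in> lmeasurable" "emeasure lebesgue S' < ennreal e"
  shows "measure lborel S \<le> e"
proof -
  have "measure lborel S = measure lebesgue S" using assms(1) by simp
  also have "\<dots> \<le> measure lebesgue S'" by (rule measure_mono_fmeasurable) (use assms in auto)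
  also have "\<dots> < e"
  proof -
    have "ennreal (measure lebesgue S') < ennreal e" using assms(3,4) by (simp add: emeasure_eq_measure2)
    then show ?thesis by (simp add: ennreal_less_iff)
  qed
  finally show ?thesis by simp
qed

lemma approx:
  fixes A W :: "'a::euclidean_space set"
  assumes A: "A \<in> sets borel" and W: "admissible_window W" and e: "e > 0"
  obtains \<psi> \<psi>' where "C1c_test (Er W v) \<psi> \<psi>'"
    "(\<integral>z. indicator (Er W v) z * \<bar>indicator A z - indicator A (z - v)\<bar> \<partial>lborel) - 5 * e
      \<le> (\<integral>z. (indicator A z - indicator A (z - v)) * \<psi> z \<partial>lborel)"
proof -
  define E where "E = Er W v"
  note Ep = Er_props[OF W, of v, folded E_def]
  define B where "B = (\<lambda>z. z - v) -` A"
  have Bb: "B \<in> sets borel" unfolding B_def by (rule borel_vim_sub[OF A])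
  define P where "P = E \<inter> A - B"
  define N where "N = E \<inter> B - A"
  have Pb: "P \<in> sets borel" "N \<in> sets borel" unfolding P_def N_def using Ep A Bb by auto
  have PE: "P \<subseteq> E" "N \<subseteq> E" unfolding P_def N_def by auto
  obtain T1 where T1: "closed T1" "T1 \<subseteq> P" "P - T1 \<in> lmeasurable" "emeasure lebesgue (P - T1) < ennreal e"
    using sets_lebesgue_inner_closed[OF borel_leb[OF Pb(1)] e] by blast
  obtain T2 where T2: "closed T2" "T2 \<subseteq> N" "N - T2 \<in> lmeasurable" "emeasure lebesgue (N - T2) < ennreal e"
    using sets_lebesgue_inner_closed[OF borel_leb[OF Pb(2)] e] by blast
  have T1b: "T1 \<in> sets borel" "T2 \<in> sets borel" using T1(1) T2(1) by auto
  obtain O1 where O1: "open O1" "T1 \<subseteq> O1" "O1 - T1 \<in> lmeasurable" "emeasure lebesgue (O1 - T1) < ennreal e"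
    using sets_lebesgue_outer_open[OF borel_leb[OF T1b(1)] e] by blast
  obtain O2 where O2: "open O2" "T2 \<subseteq> O2" "O2 - T2 \<in> lmeasurable" "emeasure lebesgue (O2 - T2) < ennreal e"
    using sets_lebesgue_outer_open[OF borel_leb[OF T1b(2)] e] by blast
  have dj: "T1 \<inter> T2 = {}" using T1(2) T2(2) unfolding P_def N_def by auto
  obtain G1 G2 where G: "open G1" "open G2" "T1 \<subseteq> G1" "T2 \<subseteq> G2" "G1 \<inter> G2 = {}"
    using separation_normal[OF T1(1) T2(1) dj] by blast
  define U1 where "U1 = O1 \<inter> G1 \<inter> E"
  define U2 where "U2 = O2 \<inter> G2 \<inter> E"
  have U: "open U1" "open U2" unfolding U1_def U2_def using O1(1) O2(1) G Ep(1) by auto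
  have TU: "T1 \<subseteq> U1" "T2 \<subseteq> U2" unfolding U1_def U2_def using T1(2) T2(2) O1(2) O2(2) G(3,4) PE by auto
  have Ubd: "bounded E" using Ep by simp
  have T1c: "compact T1" "compact T2"
    using T1(1) T2(1) T1(2) T2(2) PE Ubd by (meson bounded_subset compact_eq_bounded_closed order_trans)+
  define \<theta> where "\<theta> = e / (measure lborel E + 1)"
  have mE0: "measure lborel E \<ge> 0" by simp
  have th0: "\<theta> > 0" unfolding \<theta>_def using e mE0 by (simp add: add_nonneg_pos)
  have thE: "\<theta> * measure lborel E \<le> e"
  proof -
    have "\<theta> * measure lborel E \<le> \<theta> * (measure lborel E + 1)" using th0 by simp
    also have "\<dots> = e"
    proof -
      have M1: "measure lborel E + 1 \<noteq> 0" using mE0 by linarith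
      show ?thesis unfolding \<theta>_def using M1 by (metis nonzero_eq_divide_eq)
    qed
    finally show ?thesis .
  qed
  obtain c1 c1' where c1: "C1c_test U1 c1 c1'" "\<And>x. 0 \<le> c1 x" "\<And>x. x \<in> T1 \<Longrightarrow> 1 - \<theta> \<le> c1 x"
    using urysohn_C1[OF T1c(1) U(1) TU(1) th0] by blast
  obtain c2 c2' where c2: "C1c_test U2 c2 c2'" "\<And>x. 0 \<le> c2 x" "\<And>x. x \<in> T2 \<Longrightarrow> 1 - \<theta> \<le> c2 x"
    using urysohn_C1[OF T1c(2) U(2) TU(2) th0] by blast
  have inU1: "c1 x \<noteq> 0 \<Longrightarrow> x \<in> U1" for x using c1(1) closure_subset[of "{x. c1 x \<noteq> 0}"] unfolding C1c_test_def by blast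
  have inU2: "c2 x \<noteq> 0 \<Longrightarrow> x \<in> U2" for x using c2(1) closure_subset[of "{x. c2 x \<noteq> 0}"] unfolding C1c_test_def by blast
  have Udj: "U1 \<inter> U2 = {}" unfolding U1_def U2_def using G(5) by auto
  have c1le: "c1 x \<le> 1" for x using C1c_abs[OF c1(1)] by (simp add: abs_le_iff)
  have c2le: "c2 x \<le> 1" for x using C1c_abs[OF c2(1)] by (simp add: abs_le_iff)
  define \<psi> where "\<psi> x = c1 x - c2 x" for x
  define \<psi>' where "\<psi>' x k = c1' x k - c2' x k" for x k
  have Tpsi: "C1c_test E \<psi> \<psi>'"
  proof -
    have d1: "\<And>x. (c1 has_derivative c1' x) (at x)" "\<And>v. continuous_on UNIV (\<lambda>x. c1' x v)"
      "compact (closure {x. c1 x \<noteq> 0})" "closure {x. c1 x \<noteq> 0} \<subseteq> U1"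
      using c1(1) unfolding C1c_test_def by auto
    have d2: "\<And>x. (c2 has_derivative c2' x) (at x)" "\<And>v. continuous_on UNIV (\<lambda>x. c2' x v)"
      "compact (closure {x. c2 x \<noteq> 0})" "closure {x. c2 x \<noteq> 0} \<subseteq> U2"
      using c2(1) unfolding C1c_test_def by auto
    have der: "(\<psi> has_derivative \<psi>' x) (at x)" for x
      unfolding \<psi>_def[abs_def] \<psi>'_def[abs_def] by (rule has_derivative_diff[OF d1(1) d2(1)])
    have cont: "continuous_on UNIV (\<lambda>x. \<psi>' x v)" for v
      unfolding \<psi>'_def by (rule continuous_on_diff[OF d1(2) d2(2)])
    have sub: "{x. \<psi> x \<noteq> 0} \<subseteq> {x. c1 x \<noteq> 0} \<union> {x. c2 x \<noteq> 0}" unfolding \<psi>_def by auto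
    have cl: "closure {x. \<psi> x \<noteq> 0} \<subseteq> closure {x. c1 x \<noteq> 0} \<union> closure {x. c2 x \<noteq> 0}"
      using closure_mono[OF sub] by (simp add: closure_Un)
    have comp: "compact (closure {x. \<psi> x \<noteq> 0})"
    proof -
      have "compact ((closure {x. c1 x \<noteq> 0} \<union> closure {x. c2 x \<noteq> 0}) \<inter> closure {x. \<psi> x \<noteq> 0})"
        using d1(3) d2(3) by (intro compact_Int_closed compact_Un) auto
      moreover have "(closure {x. c1 x \<noteq> 0} \<union> closure {x. c2 x \<noteq> 0}) \<inter> closure {x. \<psi> x \<noteq> 0} = closure {x. \<psi> x \<noteq> 0}"
        using cl by blast
      ultimately show ?thesis by simp
    qed
    have inE: "closure {x. \<psi> x \<noteq> 0} \<subseteq> E" using cl d1(4) d2(4) unfolding U1_def U2_def by blast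
    have ab: "\<bar>\<psi> x\<bar> \<le> 1" for x
    proof (cases "c1 x = 0")
      case True then show ?thesis unfolding \<psi>_def using c2(2)[of x] c2le[of x] by simp
    next
      case False
      then have "x \<in> U1" by (rule inU1)
      then have "c2 x = 0" using inU2 Udj by blast
      then show ?thesis unfolding \<psi>_def using c1(2)[of x] c1le[of x] by simp
    qed
    show ?thesis unfolding C1c_test_def using der cont comp inE ab by blast
  qed
  define g where "g z = (indicator A z - indicator A (z - v) :: real)" for z
  define F where "F z = indicator (P - T1) z + indicator (N - T2) z + \<theta> * indicator E z
      + indicator ((O1 \<inter> E) - T1) z + indicator ((O2 \<inter> E) - T2) z" for z :: 'a
  have pw: "indicator E z * \<bar>g z\<bar> - g z * \<psi> z \<le> F z" for z
  proof -
    have a01: "indicator A z \<in> {0, 1::real}" "indicator A (z - v) \<in> {0, 1::real}" by (auto simp: indicator_def)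
    have "(if z \<in> E then 1 else 0) * \<bar>indicator A z - indicator A (z - v)\<bar> - (indicator A z - indicator A (z - v)) * (c1 z - c2 z)
      \<le> (if z \<in> E \<and> indicator A z = (1::real) \<and> indicator A (z - v) = (0::real) \<and> \<not> z \<in> T1 then 1 else 0)
       + (if z \<in> E \<and> indicator A z = (0::real) \<and> indicator A (z - v) = (1::real) \<and> \<not> z \<in> T2 then 1 else 0)
       + \<theta> * (if z \<in> E then 1 else 0) + (if z \<in> O1 \<and> z \<in> E \<and> \<not> z \<in> T1 then 1 else 0)
       + (if z \<in> O2 \<and> z \<in> E \<and> \<not> z \<in> T2 then 1 else 0)"
    proof (rule ptwise[OF a01 c1(2) c1le c2(2) c2le less_imp_le[OF th0], where inUa="z \<in> U1" and inUb="z \<in> U2"])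
      show "c1 z \<noteq> 0 \<Longrightarrow> z \<in> U1" by (rule inU1)
      show "c2 z \<noteq> 0 \<Longrightarrow> z \<in> U2" by (rule inU2)
      show "\<not> (z \<in> U1 \<and> z \<in> U2)" using Udj by blast
      show "z \<in> U1 \<Longrightarrow> z \<in> O1 \<and> z \<in> E" unfolding U1_def by blast
      show "z \<in> U2 \<Longrightarrow> z \<in> O2 \<and> z \<in> E" unfolding U2_def by blast
      show "z \<in> T1 \<Longrightarrow> z \<in> U1 \<and> z \<in> E \<and> indicator A z = (1::real) \<and> indicator A (z - v) = (0::real) \<and> 1 - \<theta> \<le> c1 z"
        using TU(1) T1(2) c1(3)[of z] unfolding P_def B_def by (auto simp: indicator_def)
      show "z \<in> T2 \<Longrightarrow> z \<in> U2 \<and> z \<in> E \<and> indicator A z = (0::real) \<and> indicator A (z - v) = (1::real) \<and> 1 - \<theta> \<le> c2 z"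
        using TU(2) T2(2) c2(3)[of z] unfolding N_def B_def by (auto simp: indicator_def)
    qed
    note pt = this
    have eqL: "indicator E z * \<bar>g z\<bar> - g z * \<psi> z = (if z \<in> E then 1 else 0) * \<bar>indicator A z - indicator A (z - v)\<bar> - (indicator A z - indicator A (z - v)) * (c1 z - c2 z)"
      unfolding g_def \<psi>_def by (simp add: indicator_def[of E])
    have eqP: "indicator (P - T1) z = (if z \<in> E \<and> indicator A z = (1::real) \<and> indicator A (z - v) = (0::real) \<and> z \<notin> T1 then 1 else (0::real))"
      unfolding P_def B_def by (auto simp: indicator_def)
    have eqN: "indicator (N - T2) z = (if z \<in> E \<and> indicator A z = (0::real) \<and> indicator A (z - v) = (1::real) \<and> z \<notin> T2 then 1 else (0::real))"
      unfolding N_def B_def by (auto simp: indicator_def)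
    have eqE: "indicator E z = (if z \<in> E then 1 else (0::real))" by (simp add: indicator_def)
    have eqO1: "indicator ((O1 \<inter> E) - T1) z = (if z \<in> O1 \<and> z \<in> E \<and> z \<notin> T1 then 1 else (0::real))" by (simp add: indicator_def)
    have eqO2: "indicator ((O2 \<inter> E) - T2) z = (if z \<in> O2 \<and> z \<in> E \<and> z \<notin> T2 then 1 else (0::real))" by (simp add: indicator_def)
    have "F z = (if z \<in> E \<and> indicator A z = (1::real) \<and> indicator A (z - v) = (0::real) \<and> z \<notin> T1 then 1 else 0)
       + (if z \<in> E \<and> indicator A z = (0::real) \<and> indicator A (z - v) = (1::real) \<and> z \<notin> T2 then 1 else 0)
       + \<theta> * (if z \<in> E then 1 else 0) + (if z \<in> O1 \<and> z \<in> E \<and> \<not> z \<in> T1 then 1 else 0)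
       + (if z \<in> O2 \<and> z \<in> E \<and> \<not> z \<in> T2 then 1 else 0)"
      unfolding F_def eqP eqN eqE eqO1 eqO2 ..
    then show ?thesis using pt eqL by linarith
  qed
  have mg: "g \<in> borel_measurable borel" unfolding g_def using A by measurable
  have bg: "\<bar>g z\<bar> \<le> 1" for z unfolding g_def by (simp add: indicator_def)
  have ig: "integrable lborel (\<lambda>z. g z * \<psi> z)" using C1c_integrable[OF Tpsi mg bg, of 0] by simp
  have iE: "integrable lborel (\<lambda>z. indicator E z * \<bar>g z\<bar>)"
    using sigma_integrable[OF A W, of v] unfolding g_def E_def .
  have fin: "S \<subseteq> E \<Longrightarrow> S \<in> sets borel \<Longrightarrow> integrable lborel (indicator S :: 'a \<Rightarrow> real)" for S
  proof -
    assume "S \<subseteq> E" "S \<in> sets borel"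
    then have "bounded S" using Ubd bounded_subset by blast
    then have "emeasure lborel S < \<infinity>" by (rule emeasure_bounded_finite)
    then show ?thesis using \<open>S \<in> sets borel\<close> by (intro integrable_real_indicator) auto
  qed
  have sb: "P - T1 \<in> sets borel" "N - T2 \<in> sets borel" "(O1 \<inter> E) - T1 \<in> sets borel" "(O2 \<inter> E) - T2 \<in> sets borel"
    using Pb T1b O1(1) O2(1) Ep by auto
  have ss: "P - T1 \<subseteq> E" "N - T2 \<subseteq> E" "(O1 \<inter> E) - T1 \<subseteq> E" "(O2 \<inter> E) - T2 \<subseteq> E" using PE by auto
  have iF1: "integrable lborel (indicator (P - T1) :: 'a \<Rightarrow> real)" by (rule fin[OF ss(1) sb(1)])
  have iF2: "integrable lborel (indicator (N - T2) :: 'a \<Rightarrow> real)" by (rule fin[OF ss(2) sb(2)])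
  have iF3: "integrable lborel (\<lambda>z. \<theta> * indicator E z :: real)" using fin[of E] Ep by simp
  have iF4: "integrable lborel (indicator ((O1 \<inter> E) - T1) :: 'a \<Rightarrow> real)" by (rule fin[OF ss(3) sb(3)])
  have iF5: "integrable lborel (indicator ((O2 \<inter> E) - T2) :: 'a \<Rightarrow> real)" by (rule fin[OF ss(4) sb(4)])
  have intF: "(\<integral>z. F z \<partial>lborel) = measure lborel (P - T1) + measure lborel (N - T2) + \<theta> * measure lborel E
      + measure lborel ((O1 \<inter> E) - T1) + measure lborel ((O2 \<inter> E) - T2)"
    unfolding F_def using iF1 iF2 iF3 iF4 iF5 by simp
  have m1: "measure lborel (P - T1) \<le> e" by (rule small_measure[OF sb(1) order_refl T1(3,4)])
  have m2: "measure lborel (N - T2) \<le> e" by (rule small_measure[OF sb(2) order_refl T2(3,4)])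
  have m4: "measure lborel ((O1 \<inter> E) - T1) \<le> e" by (rule small_measure[OF sb(3) _ O1(3,4)]) auto
  have m5: "measure lborel ((O2 \<inter> E) - T2) \<le> e" by (rule small_measure[OF sb(4) _ O2(3,4)]) auto
  have iF: "integrable lborel F" unfolding F_def using iF1 iF2 iF3 iF4 iF5 by simp
  have "(\<integral>z. indicator E z * \<bar>g z\<bar> \<partial>lborel) - (\<integral>z. g z * \<psi> z \<partial>lborel)
      = (\<integral>z. indicator E z * \<bar>g z\<bar> - g z * \<psi> z \<partial>lborel)"
    by (rule Bochner_Integration.integral_diff[OF iE ig, symmetric])
  also have "\<dots> \<le> (\<integral>z. F z \<partial>lborel)"
    by (rule Bochner_Integration.integral_mono[OF _ iF pw]) (intro Bochner_Integration.integrable_diff iE ig)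
  also have "\<dots> \<le> 5 * e" unfolding intF using m1 m2 m4 m5 thE by linarith
  finally have "(\<integral>z. indicator E z * \<bar>g z\<bar> \<partial>lborel) - 5 * e \<le> (\<integral>z. g z * \<psi> z \<partial>lborel)" by linarith
  then show ?thesis using that[of \<psi> \<psi>'] Tpsi unfolding E_def g_def by blast
qed


lemma zero_test: "C1c_test W (\<lambda>_. 0::real) (\<lambda>_ _. 0)"
  unfolding C1c_test_def by auto

lemma det1:
  fixes A W :: "'a::euclidean_space set" and u :: 'a
  assumes A: "A \<in> sets borel" and W: "admissible_window W" and u: "norm u = 1" and t: "t > 0"
  shows "ereal (sigma_fun (t *\<^sub>R u) W A) \<le> dir_variation u A W"
proof -
  have V0: "ereal 0 \<le> dir_variation u A W"
    using C1c_var[OF zero_test A, of u] by simp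
  show ?thesis
  proof (cases "dir_variation u A W")
    case (real r)
    define v where "v = t *\<^sub>R u"
    have nv: "norm v = t" using u t by (simp add: v_def)
    have v0: "v \<noteq> 0" using nv t by auto
    have key: "(\<integral>z. indicator (Er W v) z * \<bar>indicator A z - indicator A (z - v)\<bar> \<partial>lborel) \<le> t * r + e"
      if e: "e > 0" for e
    proof -
      have e5: "e / 5 > 0" using e by simp
      obtain \<psi> \<psi>' where T: "C1c_test (Er W v) \<psi> \<psi>'"
        and ap: "(\<integral>z. indicator (Er W v) z * \<bar>indicator A z - indicator A (z - v)\<bar> \<partial>lborel) - 5 * (e / 5)
          \<le> (\<integral>z. (indicator A z - indicator A (z - v)) * \<psi> z \<partial>lborel)"
        using approx[OF A W e5, of v] by blast
      have "(\<integral>z. (indicator A z - indicator A (z - v)) * \<psi> z \<partial>lborel) \<le> t * r"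
        unfolding v_def by (rule tele[OF A W u t real T[unfolded v_def]])
      then show ?thesis using ap by simp
    qed
    have "t * sigma_fun v W A \<le> t * r"
      unfolding nv[symmetric] sigma_formula[OF A W v0] by (rule field_le_epsilon) (use key nv in auto)
    then have "sigma_fun v W A \<le> r" using t by simp
    then show ?thesis using real unfolding v_def by simp
  next
    case PInf then show ?thesis by simp
  next
    case MInf then show ?thesis using V0 by simp
  qed
qed


lemma sections_borel:
  assumes "random_measurable_set M X" "\<omega> \<in> space M"
  shows "X \<omega> \<in> sets borel"
proof -
  have "Pair \<omega> -` {p \<in> space M \<times> UNIV. snd p \<in> X (fst p)} \<in> sets lborel"
    using assms(1) unfolding random_measurable_set_def by (intro sets_Pair1) auto
  moreover have "Pair \<omega> -` {p \<in> space M \<times> UNIV. snd p \<in> X (fst p)} = X \<omega>"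
    using assms(2) by auto
  ultimately show ?thesis by simp
qed

theorem corollary3p4:
  fixes M :: "'b measure" and X :: "'b \<Rightarrow> 'a::euclidean_space set"
    and W :: "'a set" and u :: 'a
  assumes "random_measurable_set M X"
    and "admissible_window W"
    and "norm u = 1"
  shows "(\<forall>\<epsilon>::real. \<epsilon> \<noteq> 0 \<longrightarrow> ereal (sigma_X M X (\<epsilon> *\<^sub>R u) W) \<le> exp_dir_variation M X u W)
     \<and> ((\<lambda>\<epsilon>::real. ereal (sigma_X M X (\<epsilon> *\<^sub>R u) W)) \<longlongrightarrow> exp_dir_variation M X u W) (at 0)"
proof -
  interpret P: prob_space M using assms(1) unfolding random_measurable_set_def by auto
  define V where "V \<omega> = dir_variation u (X \<omega>) W" for \<omega>
  define B where "B = (\<integral>\<^sup>+\<omega>. e2ennreal (V \<omega>) \<partial>M)"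
  have EB: "exp_dir_variation M X u W = enn2ereal B"
    unfolding exp_dir_variation_def B_def V_def by simp
  have u0: "u \<noteq> 0" using assms(3) by auto
  have key: "ereal (sigma_X M X (t *\<^sub>R u) W) = enn2ereal (\<integral>\<^sup>+\<omega>. ennreal (sigma_fun (t *\<^sub>R u) W (X \<omega>)) \<partial>M)
     \<and> (\<integral>\<^sup>+\<omega>. ennreal (sigma_fun (t *\<^sub>R u) W (X \<omega>)) \<partial>M) \<le> B" if t: "t > 0" for t
  proof -
    let ?f = "\<lambda>\<omega>. sigma_fun (t *\<^sub>R u) W (X \<omega>)"
    have tu: "t *\<^sub>R u \<noteq> 0" using t u0 by auto
    have bnd: "\<omega> \<in> space M \<Longrightarrow> 0 \<le> ?f \<omega> \<and> ?f \<omega> \<le> measure lebesgue W / norm (t *\<^sub>R u)" for \<omega>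
      using sigma_bounds[OF sections_borel[OF assms(1)] assms(2) tu] by blast
    have meas: "?f \<in> borel_measurable M" by (rule sigma_meas[OF assms(1,2)])
    have int: "integrable M ?f"
      by (rule P.integrable_const_bound[where B="measure lebesgue W / norm (t *\<^sub>R u)"])
         (use bnd meas in \<open>auto intro!: AE_I2\<close>)
    have nn: "(\<integral>\<^sup>+\<omega>. ennreal (?f \<omega>) \<partial>M) = ennreal (integral\<^sup>L M ?f)"
      by (rule nn_integral_eq_integral[OF int]) (use bnd in auto)
    have i0: "0 \<le> integral\<^sup>L M ?f"
      by (rule integral_nonneg_AE) (use bnd in auto)
    have "ereal (sigma_X M X (t *\<^sub>R u) W) = enn2ereal (\<integral>\<^sup>+\<omega>. ennreal (?f \<omega>) \<partial>M)"
      unfolding nn sigma_X_def using i0 by simp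
    moreover have "(\<integral>\<^sup>+\<omega>. ennreal (?f \<omega>) \<partial>M) \<le> B"
      unfolding B_def
    proof (rule nn_integral_mono)
      fix \<omega> assume "\<omega> \<in> space M"
      have "ereal (?f \<omega>) \<le> V \<omega>" unfolding V_def
        by (rule det1[OF sections_borel[OF assms(1) \<open>\<omega> \<in> space M\<close>] assms(2,3) t])
      then have "e2ennreal (ereal (?f \<omega>)) \<le> e2ennreal (V \<omega>)" by (rule e2ennreal_mono)
      then show "ennreal (?f \<omega>) \<le> e2ennreal (V \<omega>)" by simp
    qed
    ultimately show ?thesis by blast
  qed
  have evenX: "sigma_X M X (\<epsilon> *\<^sub>R u) W = sigma_X M X (\<bar>\<epsilon>\<bar> *\<^sub>R u) W" for \<epsilon>
  proof (cases "\<epsilon> \<ge> 0")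
    case False
    then have "\<epsilon> *\<^sub>R u = - (\<bar>\<epsilon>\<bar> *\<^sub>R u)" by simp
    then show ?thesis unfolding sigma_X_def by (simp only: sigma_even)
  qed simp
  have part1: "ereal (sigma_X M X (\<epsilon> *\<^sub>R u) W) \<le> exp_dir_variation M X u W" if "\<epsilon> \<noteq> 0" for \<epsilon>
  proof -
    have "\<bar>\<epsilon>\<bar> > 0" using that by simp
    from key[OF this] show ?thesis unfolding EB evenX[of \<epsilon>]
      by (simp add: less_eq_ennreal.rep_eq)
  qed
  have part2: "((\<lambda>\<epsilon>::real. ereal (sigma_X M X (\<epsilon> *\<^sub>R u) W)) \<longlongrightarrow> exp_dir_variation M X u W) (at 0)"
    unfolding tendsto_at_iff_sequentially
  proof (intro allI impI)
    fix E :: "nat \<Rightarrow> real" assume E0: "\<forall>i. E i \<in> UNIV - {0}" and El: "E \<longlonglongrightarrow> 0"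
    define h where "h n = \<bar>E n\<bar>" for n
    have hpos: "h n > 0" for n using E0 by (auto simp: h_def)
    have hl: "h \<longlonglongrightarrow> 0" unfolding h_def using tendsto_rabs[OF El] by simp
    define a where "a n = (\<integral>\<^sup>+\<omega>. ennreal (sigma_fun (h n *\<^sub>R u) W (X \<omega>)) \<partial>M)" for n
    have aB: "a n \<le> B" for n using key[OF hpos] unfolding a_def by blast
    have pt: "(\<lambda>n. ennreal (sigma_fun (h n *\<^sub>R u) W (X \<omega>))) \<longlonglongrightarrow> e2ennreal (V \<omega>)"
      if \<omega>: "\<omega> \<in> space M" for \<omega>
    proof -
      have Ab: "X \<omega> \<in> sets borel" by (rule sections_borel[OF assms(1) \<omega>])
      let ?g = "\<lambda>n. ereal (sigma_fun (h n *\<^sub>R u) W (X \<omega>))"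
      have up: "Limsup sequentially ?g \<le> V \<omega>"
        unfolding V_def by (intro Limsup_bounded always_eventually allI det1[OF Ab assms(2,3) hpos])
      have lo: "V \<omega> \<le> Liminf sequentially ?g"
        unfolding V_def by (rule det2[OF Ab assms(2,3) hl hpos])
      have "Liminf sequentially ?g \<le> Limsup sequentially ?g" by (rule Liminf_le_Limsup) simp
      then have "?g \<longlonglongrightarrow> V \<omega>"
        using up lo by (intro Liminf_eq_Limsup) auto
      then have "(\<lambda>n. e2ennreal (?g n)) \<longlonglongrightarrow> e2ennreal (V \<omega>)" by (rule tendsto_e2ennrealI)
      then show ?thesis by simp
    qed
    have "B = (\<integral>\<^sup>+\<omega>. liminf (\<lambda>n. ennreal (sigma_fun (h n *\<^sub>R u) W (X \<omega>))) \<partial>M)"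
      unfolding B_def
      by (intro nn_integral_cong) (use pt in \<open>auto intro!: lim_imp_Liminf[symmetric]\<close>)
    also have "\<dots> \<le> liminf a"
      unfolding a_def by (rule nn_integral_liminf) (use sigma_meas[OF assms(1,2)] in auto)
    finally have Bl: "B \<le> liminf a" .
    have Lu: "limsup a \<le> B" by (intro Limsup_bounded always_eventually allI aB)
    have "liminf a \<le> limsup a" by (rule Liminf_le_Limsup) simp
    then have "a \<longlonglongrightarrow> B" using Bl Lu by (intro Liminf_eq_Limsup) auto
    then have "(\<lambda>n. enn2ereal (a n)) \<longlonglongrightarrow> enn2ereal B" by (rule tendsto_enn2erealI)
    moreover have "enn2ereal (a n) = ereal (sigma_X M X (E n *\<^sub>R u) W)" for n
      using key[OF hpos] unfolding a_def evenX[of "E n"] h_def by simp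
    ultimately show "((\<lambda>\<epsilon>. ereal (sigma_X M X (\<epsilon> *\<^sub>R u) W)) \<circ> E) \<longlonglongrightarrow> exp_dir_variation M X u W"
      unfolding EB comp_def by simp
  qed
  show ?thesis using part1 part2 by blast
qed


end
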